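(* Let $n\ge5$, $g=[\frac12(n-1)]$, and let $H=y^2+x^2+a_1x^3+\dots+a_{n-2}x^n$ with $a_k\in\mathbb{R}$, $a_{n-2}\neq0$. Let $\delta(t)$, $t\in(0,T_H)$, be the continuous family of ovals in $\{H=t\}$ surrounding the center at the origin, oriented clockwise (along the Hamiltonian flow $\dot x=\partial H/\partial y$, $\dot y=-\partial H/\partial x$), and for integers $k\ge0$ set $I_k(t)=\int_{\delta(t)}x^k\,dx/y$. Then, for small positive $t$: (i) $I_{2k}(t)=t^k[c_k+O(t)]$, where $c_k=2\pi\frac{(2k-1)!!}{(2k)!!}$; (ii) $I_{2k+1}(t)=-\frac12\sum_{j=1}^g a_{2j-1}(2k+2j+1)\,t^{k+j}[c_{k+j}+O(t)]$. In particular, the coefficients in the expansion (ii) belong to the ideal generated by the odd-numbered parameters $a_1,a_3,\dots,a_{2g-1}$.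
   Context: $[\cdot]$ denotes the integer part; $(-1)!!=1$, $0!!=1$. *)

theory Defs
  imports "HOL-Analysis.Analysis" "HOL-Library.Landau_Symbols"
begin

(* Double factorial on naturals: 0!! = 1, 1!! = 1, (m+2)!! = (m+2) * m!!.
   The convention (-1)!! = 1 is realised in cc below via nat subtraction (2*0-1 = 0). *)
fun dfact :: "nat \<Rightarrow> nat" where
  "dfact 0 = 1"
| "dfact (Suc 0) = 1"
| "dfact (Suc (Suc m)) = Suc (Suc m) * dfact m"

definition cc :: "nat \<Rightarrow> real" where
  "cc k = 2 * pi * real (dfact (2 * k - 1)) / real (dfact (2 * k))"

definition ham_field :: "(real \<times> real \<Rightarrow> real) \<Rightarrow> real \<times> real \<Rightarrow> real \<times> real" where
  "ham_field H p = (deriv (\<lambda>y. H (fst p, y)) (snd p), - deriv (\<lambda>x. H (x, snd p)) (fst p))"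

definition central_oval :: "(real \<times> real \<Rightarrow> real) \<Rightarrow> real \<Rightarrow> (real \<times> real) set" where
  "central_oval H t = frontier (connected_component_set {p. H p < t} (0, 0))"

(* gamma on [0,P] traverses the oval exactly once along the Hamiltonian flow
   (hence clockwise) *)
definition oval_param ::
  "(real \<times> real \<Rightarrow> real) \<Rightarrow> real \<Rightarrow> (real \<Rightarrow> real \<times> real) \<Rightarrow> real \<Rightarrow> bool" where
  "oval_param H t \<gamma> P \<longleftrightarrow>
     P > 0 \<and>
     (\<forall>s. (\<gamma> has_vector_derivative ham_field H (\<gamma> s)) (at s)) \<and>
     \<gamma> P = \<gamma> 0 \<and>
     inj_on \<gamma> {0..<P} \<and>
     \<gamma> ` {0..<P} = central_oval H t"

definition oval_integral :: "(real \<times> real \<Rightarrow> real) \<Rightarrow> nat \<Rightarrow> real \<Rightarrow> real" where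
  "oval_integral H k t =
     (THE v. \<exists>\<gamma> P. oval_param H t \<gamma> P \<and>
        v = integral {0..P} (\<lambda>s. (fst (\<gamma> s)) ^ k / snd (\<gamma> s) * fst (vector_derivative \<gamma> (at s))))"

end

theory Submission imports Defs begin


locale osc =
  fixes n :: nat and a :: "nat \<Rightarrow> real"
  assumes n5: "5 \<le> n"
begin

definition Ap :: "real \<Rightarrow> real" where "Ap x = (\<Sum>i=1..n-2. a i * x ^ i)"
definition Apd :: "real \<Rightarrow> real" where "Apd x = (\<Sum>i=1..n-2. a i * (real i * x ^ (i - 1)))"
definition FF :: "real \<Rightarrow> real" where "FF x = x ^ 2 + (\<Sum>i=1..n-2. a i * x ^ (i + 2))"
definition FFd :: "real \<Rightarrow> real" where "FFd x = 2 * x + (\<Sum>i=1..n-2. a i * (real (i + 2) * x ^ (i + 1)))"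
definition qq :: "real \<Rightarrow> real" where "qq x = sqrt (1 + Ap x)"
definition ph :: "real \<Rightarrow> real" where "ph x = x * qq x"
definition phd :: "real \<Rightarrow> real" where "phd x = qq x + x * Apd x / (2 * qq x)"
definition M1 :: real where "M1 = (\<Sum>i=1..n-2. \<bar>a i\<bar>)"
definition M2 :: real where "M2 = (\<Sum>i=1..n-2. real i * \<bar>a i\<bar>)"
definition dl :: real where "dl = min 1 (1 / (4 * (M1 + M2 + 1)))"

lemma M1_nonneg: "0 \<le> M1" unfolding M1_def by (intro sum_nonneg) auto
lemma M2_nonneg: "0 \<le> M2" unfolding M2_def by (intro sum_nonneg) auto
lemma dl_pos: "0 < dl" unfolding dl_def using M1_nonneg M2_nonneg by auto
lemma dl_le1: "dl \<le> 1" unfolding dl_def by auto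
lemma dl_M: "dl * (M1 + M2 + 1) \<le> 1/4"
proof -
  have "dl \<le> 1 / (4 * (M1 + M2 + 1))" unfolding dl_def by auto
  then have "dl * (M1 + M2 + 1) \<le> 1 / (4 * (M1 + M2 + 1)) * (M1 + M2 + 1)"
    using M1_nonneg M2_nonneg by (intro mult_right_mono) auto
  also have "\<dots> = 1/4" using M1_nonneg M2_nonneg by (simp add: field_simps)
  finally show ?thesis .
qed

lemma n2_split: "{1..n-2} = insert 1 {2..n-2}" "1 \<notin> {2..n-2::nat}"
  using n5 by auto

lemma Ap_bound: assumes "\<bar>x\<bar> \<le> 1" shows "\<bar>Ap x\<bar> \<le> M1 * \<bar>x\<bar>"
proof -
  have "\<bar>Ap x\<bar> \<le> (\<Sum>i=1..n-2. \<bar>a i * x ^ i\<bar>)" unfolding Ap_def by (rule sum_abs)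
  also have "\<dots> \<le> (\<Sum>i=1..n-2. \<bar>a i\<bar> * \<bar>x\<bar>)"
  proof (intro sum_mono)
    fix i assume i: "i \<in> {1..n-2}"
    have "\<bar>x\<bar> ^ i \<le> \<bar>x\<bar> ^ 1" using i assms by (intro power_decreasing) auto
    then show "\<bar>a i * x ^ i\<bar> \<le> \<bar>a i\<bar> * \<bar>x\<bar>"
      by (simp add: abs_mult power_abs mult_left_mono)
  qed
  also have "\<dots> = M1 * \<bar>x\<bar>" unfolding M1_def by (simp add: sum_distrib_right)
  finally show ?thesis .
qed

lemma Ap_bound2: assumes "\<bar>x\<bar> \<le> 1" shows "\<bar>Ap x - a 1 * x\<bar> \<le> M1 * x ^ 2"
proof -
  have "Ap x - a 1 * x = (\<Sum>i=2..n-2. a i * x ^ i)"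
    unfolding Ap_def n2_split(1) using n2_split(2) by simp
  then have "\<bar>Ap x - a 1 * x\<bar> \<le> (\<Sum>i=2..n-2. \<bar>a i * x ^ i\<bar>)" by (simp add: sum_abs)
  also have "\<dots> \<le> (\<Sum>i=2..n-2. \<bar>a i\<bar> * x ^ 2)"
  proof (intro sum_mono)
    fix i assume i: "i \<in> {2..n-2}"
    have "\<bar>x\<bar> ^ i \<le> \<bar>x\<bar> ^ 2" using i assms by (intro power_decreasing) auto
    then show "\<bar>a i * x ^ i\<bar> \<le> \<bar>a i\<bar> * x ^ 2"
      by (simp add: abs_mult power_abs mult_left_mono)
  qed
  also have "\<dots> \<le> (\<Sum>i=1..n-2. \<bar>a i\<bar> * x ^ 2)"
    unfolding n2_split(1) using n2_split(2) by simp
  also have "\<dots> = M1 * x ^ 2" unfolding M1_def by (simp add: sum_distrib_right)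
  finally show ?thesis .
qed

lemma Apd_bound: assumes "\<bar>x\<bar> \<le> 1" shows "\<bar>Apd x\<bar> \<le> M2"
proof -
  have "\<bar>Apd x\<bar> \<le> (\<Sum>i=1..n-2. \<bar>a i * (real i * x ^ (i - 1))\<bar>)" unfolding Apd_def by (rule sum_abs)
  also have "\<dots> \<le> (\<Sum>i=1..n-2. real i * \<bar>a i\<bar>)"
  proof (intro sum_mono)
    fix i assume i: "i \<in> {1..n-2}"
    have "\<bar>x\<bar> ^ (i - 1) \<le> 1" using assms by (simp add: power_le_one)
    then have "\<bar>a i\<bar> * (real i * \<bar>x\<bar> ^ (i - 1)) \<le> \<bar>a i\<bar> * (real i * 1)"
      by (intro mult_left_mono) auto
    then show "\<bar>a i * (real i * x ^ (i - 1))\<bar> \<le> real i * \<bar>a i\<bar>"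
      by (simp add: abs_mult power_abs mult.commute)
  qed
  finally show ?thesis unfolding M2_def .
qed

lemma Apd_bound2: assumes "\<bar>x\<bar> \<le> 1" shows "\<bar>Apd x - a 1\<bar> \<le> M2 * \<bar>x\<bar>"
proof -
  have "Apd x - a 1 = (\<Sum>i=2..n-2. a i * (real i * x ^ (i - 1)))"
    unfolding Apd_def n2_split(1) using n2_split(2) by simp
  then have "\<bar>Apd x - a 1\<bar> \<le> (\<Sum>i=2..n-2. \<bar>a i * (real i * x ^ (i - 1))\<bar>)" by (simp add: sum_abs)
  also have "\<dots> \<le> (\<Sum>i=2..n-2. real i * \<bar>a i\<bar> * \<bar>x\<bar>)"
  proof (intro sum_mono)
    fix i assume i: "i \<in> {2..n-2}"
    have "\<bar>x\<bar> ^ (i - 1) \<le> \<bar>x\<bar> ^ 1" using i assms by (intro power_decreasing) auto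
    then have "\<bar>a i\<bar> * (real i * \<bar>x\<bar> ^ (i - 1)) \<le> \<bar>a i\<bar> * (real i * \<bar>x\<bar>)"
      by (intro mult_left_mono) auto
    then show "\<bar>a i * (real i * x ^ (i - 1))\<bar> \<le> real i * \<bar>a i\<bar> * \<bar>x\<bar>"
      by (simp add: abs_mult power_abs algebra_simps)
  qed
  also have "\<dots> \<le> (\<Sum>i=1..n-2. real i * \<bar>a i\<bar> * \<bar>x\<bar>)"
    unfolding n2_split(1) using n2_split(2) by simp
  also have "\<dots> = M2 * \<bar>x\<bar>" unfolding M2_def by (simp add: sum_distrib_right)
  finally show ?thesis .
qed

lemma DERIV_Ap: "(Ap has_real_derivative Apd x) (at x)"
  unfolding Ap_def[abs_def] Apd_def
  by (auto intro!: derivative_eq_intros sum.cong simp: algebra_simps)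

lemma DERIV_FF: "(FF has_real_derivative FFd x) (at x)"
proof -
  have "\<And>i. ((\<lambda>x. a i * x ^ (i + 2)) has_real_derivative a i * (real (i + 2) * x ^ (i + 1))) (at x)"
    subgoal for i using DERIV_cmult[OF DERIV_pow[of "i+2" x], of "a i"] by simp
    done
  then have S: "((\<lambda>x. \<Sum>i=1..n-2. a i * x ^ (i + 2)) has_real_derivative (\<Sum>i=1..n-2. a i * (real (i + 2) * x ^ (i + 1)))) (at x)"
    by (intro DERIV_sum) auto
  have "((\<lambda>x. x ^ 2 + (\<Sum>i=1..n-2. a i * x ^ (i + 2))) has_real_derivative 2 * x + (\<Sum>i=1..n-2. a i * (real (i + 2) * x ^ (i + 1)))) (at x)"
    using DERIV_add[OF DERIV_pow[of 2 x] S] by simp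
  then show ?thesis unfolding FF_def[abs_def] FFd_def .
qed

lemma small_Ap: assumes "\<bar>x\<bar> \<le> dl" shows "\<bar>Ap x\<bar> \<le> 1/4" "\<bar>x * Apd x\<bar> \<le> 1/4"
proof -
  have x1: "\<bar>x\<bar> \<le> 1" using assms dl_le1 by auto
  have "\<bar>Ap x\<bar> \<le> M1 * \<bar>x\<bar>" by (rule Ap_bound[OF x1])
  also have "\<dots> \<le> (M1 + M2 + 1) * dl" using assms M1_nonneg M2_nonneg
    by (intro mult_mono) auto
  also have "\<dots> \<le> 1/4" using dl_M by (simp add: mult.commute)
  finally show "\<bar>Ap x\<bar> \<le> 1/4" .
  have "\<bar>x * Apd x\<bar> \<le> dl * M2" unfolding abs_mult using assms Apd_bound[OF x1]
    by (intro mult_mono) auto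
  also have "\<dots> \<le> dl * (M1 + M2 + 1)" using dl_pos M1_nonneg by (intro mult_left_mono) auto
  finally show "\<bar>x * Apd x\<bar> \<le> 1/4" using dl_M by linarith
qed

lemma qq_bounds: assumes "\<bar>x\<bar> \<le> dl" shows "3/4 \<le> qq x" "qq x \<le> 5/4" "0 < 1 + Ap x"
  "qq x ^ 2 = 1 + Ap x"
proof -
  have A: "\<bar>Ap x\<bar> \<le> 1/4" by (rule small_Ap[OF assms])
  have "sqrt ((3/4)^2) \<le> qq x" unfolding qq_def using A by (intro real_sqrt_le_mono) (auto simp: power2_eq_square)
  then show "3/4 \<le> qq x" by simp
  have "qq x \<le> sqrt ((5/4)^2)" unfolding qq_def using A by (intro real_sqrt_le_mono) (auto simp: power2_eq_square)
  then show "qq x \<le> 5/4" by simp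
  show "0 < 1 + Ap x" using A by auto
  then show "qq x ^ 2 = 1 + Ap x" unfolding qq_def by simp
qed

lemma DERIV_qq: assumes "0 < 1 + Ap x" shows "(qq has_real_derivative Apd x / (2 * qq x)) (at x)"
proof -
  have "((\<lambda>x. sqrt (1 + Ap x)) has_real_derivative inverse (sqrt (1 + Ap x)) / 2 * (0 + Apd x)) (at x)"
    by (intro DERIV_real_sqrt DERIV_Ap derivative_intros DERIV_chain2[of sqrt] assms)
  then show ?thesis unfolding qq_def[abs_def] by (simp add: field_simps)
qed

lemma DERIV_ph: assumes "0 < 1 + Ap x" shows "(ph has_real_derivative phd x) (at x)"
proof -
  have "((\<lambda>x. x * qq x) has_real_derivative 1 * qq x + Apd x / (2 * qq x) * x) (at x)"
    by (rule DERIV_mult[OF DERIV_ident DERIV_qq[OF assms]])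
  then show ?thesis unfolding ph_def[abs_def] phd_def by (simp add: mult.commute)
qed

end

context osc begin

lemma phd_bounds: assumes "\<bar>x\<bar> \<le> dl" shows "1/2 \<le> phd x" "phd x \<le> 2"
proof -
  note Q = qq_bounds[OF assms] and S = small_Ap[OF assms]
  have "\<bar>x * Apd x / (2 * qq x)\<bar> = \<bar>x * Apd x\<bar> / (2 * qq x)" using Q by (simp add: abs_div)
  also have "\<dots> \<le> (1/4) / (2 * (3/4))" using Q S by (intro frac_le) auto
  finally have B: "\<bar>x * Apd x / (2 * qq x)\<bar> \<le> 1/6" by simp
  show "1/2 \<le> phd x" unfolding phd_def using B Q by linarith
  show "phd x \<le> 2" unfolding phd_def using B Q by linarith
qed

lemma qq_m1: assumes "\<bar>x\<bar> \<le> dl" shows "\<bar>qq x - 1\<bar> \<le> \<bar>Ap x\<bar>"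
proof -
  note Q = qq_bounds[OF assms]
  have "(qq x - 1) * (qq x + 1) = Ap x" using Q(4) by (simp add: algebra_simps power2_eq_square)
  then have "\<bar>Ap x\<bar> = \<bar>qq x - 1\<bar> * \<bar>qq x + 1\<bar>" by (simp add: abs_mult[symmetric])
  also have "\<bar>qq x + 1\<bar> = qq x + 1" using Q by simp
  finally have E: "\<bar>Ap x\<bar> = \<bar>qq x - 1\<bar> * (qq x + 1)" .
  have "\<bar>qq x - 1\<bar> * 1 \<le> \<bar>qq x - 1\<bar> * (qq x + 1)" using Q by (intro mult_left_mono) auto
  then show ?thesis using E by simp
qed

lemma qq_exact: assumes "\<bar>x\<bar> \<le> dl" shows "qq x - 1 - Ap x / 2 = -((qq x - 1) ^ 2) / 2"
  using qq_bounds(4)[OF assms] by (simp add: algebra_simps power2_eq_square)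

definition C1 :: real where "C1 = M1 ^ 2 / 2 + M1 / 2 + M2 + \<bar>a 1\<bar> * M1"

lemma phd_approx: assumes "\<bar>x\<bar> \<le> dl" shows "\<bar>phd x - 1 - a 1 * x\<bar> \<le> C1 * x ^ 2"
proof -
  note Q = qq_bounds[OF assms]
  have x1: "\<bar>x\<bar> \<le> 1" using assms dl_le1 by auto
  have e: "phd x - 1 - a 1 * x = (qq x - 1 - Ap x / 2) + (Ap x - a 1 * x) / 2
      + x * ((Apd x - a 1) + a 1 * (1 - qq x)) / (2 * qq x)"
    unfolding phd_def using Q by (simp add: field_simps)
  have A1: "\<bar>Ap x\<bar> \<le> M1 * \<bar>x\<bar>" by (rule Ap_bound[OF x1])
  have T1: "\<bar>qq x - 1 - Ap x / 2\<bar> \<le> M1 ^ 2 / 2 * x ^ 2"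
  proof -
    have "\<bar>qq x - 1 - Ap x / 2\<bar> = (qq x - 1) ^ 2 / 2" using qq_exact[OF assms] by simp
    also have "\<dots> \<le> (M1 * \<bar>x\<bar>) ^ 2 / 2"
    proof -
      have "\<bar>qq x - 1\<bar> \<le> M1 * \<bar>x\<bar>" using qq_m1[OF assms] A1 by linarith
      then have "\<bar>qq x - 1\<bar> ^ 2 \<le> (M1 * \<bar>x\<bar>) ^ 2" by (intro power_mono) auto
      then show ?thesis by simp
    qed
    finally show ?thesis by (simp add: power_mult_distrib)
  qed
  have T2: "\<bar>(Ap x - a 1 * x) / 2\<bar> \<le> M1 / 2 * x ^ 2" using Ap_bound2[OF x1] by simp
  have T3: "\<bar>x * ((Apd x - a 1) + a 1 * (1 - qq x)) / (2 * qq x)\<bar> \<le> (M2 + \<bar>a 1\<bar> * M1) * x ^ 2"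
  proof -
    have "\<bar>(Apd x - a 1) + a 1 * (1 - qq x)\<bar> \<le> M2 * \<bar>x\<bar> + \<bar>a 1\<bar> * (M1 * \<bar>x\<bar>)"
    proof -
      have "\<bar>1 - qq x\<bar> \<le> M1 * \<bar>x\<bar>" using qq_m1[OF assms] A1 by (simp add: abs_minus_commute)
      then have "\<bar>a 1\<bar> * \<bar>1 - qq x\<bar> \<le> \<bar>a 1\<bar> * (M1 * \<bar>x\<bar>)" by (intro mult_left_mono) auto
      moreover have "\<bar>(Apd x - a 1) + a 1 * (1 - qq x)\<bar> \<le> \<bar>Apd x - a 1\<bar> + \<bar>a 1\<bar> * \<bar>1 - qq x\<bar>"
        using abs_triangle_ineq[of "Apd x - a 1" "a 1 * (1 - qq x)"] by (simp add: abs_mult)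
      ultimately show ?thesis using Apd_bound2[OF x1] by linarith
    qed
    then have "\<bar>x * ((Apd x - a 1) + a 1 * (1 - qq x))\<bar> \<le> \<bar>x\<bar> * ((M2 + \<bar>a 1\<bar> * M1) * \<bar>x\<bar>)"
      unfolding abs_mult by (intro mult_left_mono) (auto simp: algebra_simps)
    also have "\<dots> = (M2 + \<bar>a 1\<bar> * M1) * x ^ 2" by (simp add: power2_eq_square)
    finally have N: "\<bar>x * ((Apd x - a 1) + a 1 * (1 - qq x))\<bar> \<le> (M2 + \<bar>a 1\<bar> * M1) * x ^ 2" .
    have "\<bar>x * ((Apd x - a 1) + a 1 * (1 - qq x)) / (2 * qq x)\<bar>
        = \<bar>x * ((Apd x - a 1) + a 1 * (1 - qq x))\<bar> / (2 * qq x)" using Q by (simp add: abs_div)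
    also have "\<dots> \<le> \<bar>x * ((Apd x - a 1) + a 1 * (1 - qq x))\<bar> / 1" using Q by (intro divide_left_mono) auto
    finally show ?thesis using N by simp
  qed
  have "\<bar>phd x - 1 - a 1 * x\<bar> \<le> \<bar>qq x - 1 - Ap x / 2\<bar> + \<bar>(Ap x - a 1 * x) / 2\<bar>
      + \<bar>x * ((Apd x - a 1) + a 1 * (1 - qq x)) / (2 * qq x)\<bar>"
    unfolding e by (rule order.trans[OF abs_triangle_ineq add_right_mono[OF abs_triangle_ineq]])
  also have "\<dots> \<le> M1 ^ 2 / 2 * x ^ 2 + M1 / 2 * x ^ 2 + (M2 + \<bar>a 1\<bar> * M1) * x ^ 2"
    using T1 T2 T3 by linarith
  also have "\<dots> = C1 * x ^ 2" unfolding C1_def by (simp add: algebra_simps)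
  finally show ?thesis .
qed

lemma ph_approx: assumes "\<bar>x\<bar> \<le> dl" shows "\<bar>ph x - x\<bar> \<le> M1 * x ^ 2"
proof -
  have x1: "\<bar>x\<bar> \<le> 1" using assms dl_le1 by auto
  have "\<bar>ph x - x\<bar> = \<bar>x\<bar> * \<bar>qq x - 1\<bar>" unfolding ph_def by (simp add: abs_mult[symmetric] algebra_simps)
  also have "\<dots> \<le> \<bar>x\<bar> * (M1 * \<bar>x\<bar>)" using qq_m1[OF assms] Ap_bound[OF x1] by (intro mult_left_mono) auto
  finally show ?thesis by (simp add: power2_eq_square algebra_simps)
qed

lemma FF_ph: assumes "\<bar>x\<bar> \<le> dl" shows "FF x = ph x ^ 2"
proof -
  have "ph x ^ 2 = x ^ 2 * (1 + Ap x)" unfolding ph_def using qq_bounds(4)[OF assms] by (simp add: power_mult_distrib)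
  also have "\<dots> = FF x" unfolding FF_def Ap_def by (simp add: distrib_left sum_distrib_left power_add power2_eq_square mult_ac)
  finally show ?thesis by simp
qed

lemma FFd_ph: assumes "\<bar>x\<bar> < dl" shows "FFd x = 2 * ph x * phd x"
proof -
  have "((\<lambda>x. ph x ^ 2) has_real_derivative of_nat 2 * (phd x * ph x ^ (2 - Suc 0))) (at x)"
    using assms by (intro DERIV_power DERIV_ph qq_bounds(3)) auto
  then have "((\<lambda>x. ph x ^ 2) has_real_derivative 2 * ph x * phd x) (at x)" by (simp add: mult_ac)
  then have "(FF has_real_derivative 2 * ph x * phd x) (at x)"
    by (rule has_field_derivative_transform_within_open[where S="{-dl<..<dl}"])
       (use assms FF_ph in auto)
  then show ?thesis using DERIV_FF DERIV_unique by blast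
qed

lemma ph_abs: assumes "\<bar>x\<bar> \<le> dl" shows "3/4 * \<bar>x\<bar> \<le> \<bar>ph x\<bar>" "\<bar>ph x\<bar> \<le> 5/4 * \<bar>x\<bar>"
proof -
  note Q = qq_bounds[OF assms]
  have "\<bar>x\<bar> * (3/4) \<le> \<bar>x\<bar> * qq x" "\<bar>x\<bar> * qq x \<le> \<bar>x\<bar> * (5/4)" using Q by (intro mult_left_mono; simp)+
  then show "3/4 * \<bar>x\<bar> \<le> \<bar>ph x\<bar>" "\<bar>ph x\<bar> \<le> 5/4 * \<bar>x\<bar>" using Q unfolding ph_def abs_mult by auto
qed

lemma ph_mono: assumes "-dl \<le> x" "x < y" "y \<le> dl" shows "ph x < ph y"
proof (rule DERIV_pos_imp_increasing[OF assms(2)])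
  fix z assume "x \<le> z" "z \<le> y"
  then have z: "\<bar>z\<bar> \<le> dl" using assms by auto
  show "\<exists>d. (ph has_real_derivative d) (at z) \<and> 0 < d"
    using DERIV_ph[OF qq_bounds(3)[OF z]] phd_bounds[OF z] by force
qed

lemma ph_inj: assumes "\<bar>x\<bar> \<le> dl" "\<bar>y\<bar> \<le> dl" "ph x = ph y" shows "x = y"
proof -
  have "\<not> x < y" using ph_mono[of x y] assms by (auto simp: abs_le_iff)
  moreover have "\<not> y < x" using ph_mono[of y x] assms by (auto simp: abs_le_iff)
  ultimately show ?thesis by auto
qed

lemma ph_0[simp]: "ph 0 = 0" unfolding ph_def by simp

lemma isCont_ph: assumes "\<bar>x\<bar> \<le> dl" shows "isCont ph x"
  using DERIV_ph[OF qq_bounds(3)[OF assms]] DERIV_isCont by blast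

lemma isCont_phd: assumes "\<bar>x\<bar> \<le> dl" shows "isCont phd x"
proof -
  have "isCont qq x" using DERIV_qq[OF qq_bounds(3)[OF assms]] DERIV_isCont by blast
  moreover have "isCont Apd x" unfolding Apd_def[abs_def] by (intro continuous_intros)
  ultimately show ?thesis unfolding phd_def[abs_def] using qq_bounds[OF assms]
    by (intro continuous_intros) auto
qed

end

context osc begin

definition ps :: "real \<Rightarrow> real" where "ps X = (THE x. \<bar>x\<bar> \<le> dl \<and> ph x = X)"
definition psd :: "real \<Rightarrow> real" where "psd X = 1 / phd (ps X)"

lemma ph_dl: "ph (-dl) \<le> -(3/4) * dl" "3/4 * dl \<le> ph dl"
proof -
  have d: "\<bar>dl\<bar> \<le> dl" "\<bar>-dl\<bar> \<le> dl" using dl_pos by auto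
  have "ph (-dl) < ph 0" using ph_mono[of "-dl" 0] dl_pos by auto
  then show "ph (-dl) \<le> -(3/4) * dl" using ph_abs(1)[OF d(2)] dl_pos by auto
  have "ph 0 < ph dl" using ph_mono[of 0 dl] dl_pos by auto
  then show "3/4 * dl \<le> ph dl" using ph_abs(1)[OF d(1)] dl_pos by auto
qed

lemma ps_ex: assumes "\<bar>X\<bar> \<le> dl / 2" shows "\<exists>x. \<bar>x\<bar> \<le> dl \<and> ph x = X"
proof -
  have "\<exists>x\<ge>-dl. x \<le> dl \<and> ph x = X"
    using ph_dl assms dl_pos by (intro IVT) (auto intro!: isCont_ph simp: abs_le_iff)
  then show ?thesis by (auto simp: abs_le_iff)
qed

lemma ps_ph: assumes "\<bar>x\<bar> \<le> dl" shows "ps (ph x) = x"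
  unfolding ps_def
proof (rule the_equality)
  show "\<bar>x\<bar> \<le> dl \<and> ph x = ph x" using assms by simp
  fix y assume "\<bar>y\<bar> \<le> dl \<and> ph y = ph x"
  then show "y = x" using ph_inj assms by blast
qed

lemma ps_props: assumes "\<bar>X\<bar> \<le> dl / 2" shows "\<bar>ps X\<bar> \<le> dl" "ph (ps X) = X"
proof -
  obtain x where x: "\<bar>x\<bar> \<le> dl" "ph x = X" using ps_ex[OF assms] by blast
  have "ps X = x" using ps_ph[OF x(1)] x(2) by simp
  then show "\<bar>ps X\<bar> \<le> dl" "ph (ps X) = X" using x by auto
qed

lemma ps_abs: assumes "\<bar>X\<bar> \<le> dl / 2" shows "\<bar>ps X\<bar> \<le> 4/3 * \<bar>X\<bar>" "\<bar>ps X\<bar> \<le> 2 * \<bar>X\<bar>" "\<bar>ps X\<bar> < dl"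
proof -
  have "3/4 * \<bar>ps X\<bar> \<le> \<bar>X\<bar>" using ph_abs(1)[OF ps_props(1)[OF assms]] ps_props(2)[OF assms] by simp
  then show a: "\<bar>ps X\<bar> \<le> 4/3 * \<bar>X\<bar>" by simp
  then show "\<bar>ps X\<bar> \<le> 2 * \<bar>X\<bar>" by simp
  show "\<bar>ps X\<bar> < dl" using a assms dl_pos by simp
qed

lemma ps_0: "ps 0 = 0" using ps_ph[of 0] dl_pos by simp

lemma isCont_ps: assumes "\<bar>X\<bar> < dl / 2" shows "isCont ps X"
proof -
  define x where "x = ps X"
  have x: "\<bar>x\<bar> < dl" "ph x = X" unfolding x_def using ps_abs(3)[of X] ps_props(2)[of X] assms by auto
  have "isCont ps (ph x)"
  proof (rule isCont_inverse_function[where d="dl - \<bar>x\<bar>" and f=ph and g=ps])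
    show "0 < dl - \<bar>x\<bar>" using x by simp
    fix z assume "\<bar>z - x\<bar> \<le> dl - \<bar>x\<bar>"
    then have z: "\<bar>z\<bar> \<le> dl" by linarith
    show "ps (ph z) = z" by (rule ps_ph[OF z])
    show "isCont ph z" by (rule isCont_ph[OF z])
  qed
  then show ?thesis using x by simp
qed

lemma DERIV_ps: assumes "\<bar>X\<bar> < dl / 2" shows "(ps has_real_derivative psd X) (at X)"
proof -
  have p: "\<bar>ps X\<bar> \<le> dl" using ps_abs(3)[of X] assms by auto
  have "(ps has_real_derivative inverse (phd (ps X))) (at X)"
  proof (rule DERIV_inverse_function[where f=ph and a="-(dl/2)" and b="dl/2"])
    show "(ph has_real_derivative phd (ps X)) (at (ps X))" using DERIV_ph[OF qq_bounds(3)[OF p]] .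
    show "phd (ps X) \<noteq> 0" using phd_bounds[OF p] by auto
    show "-(dl/2) < X" "X < dl/2" using assms by auto
    show "isCont ps X" by (rule isCont_ps[OF assms])
    fix y assume "-(dl/2) < y" "y < dl/2"
    then show "ph (ps y) = y" using ps_props(2)[of y] by auto
  qed
  then show ?thesis unfolding psd_def by (simp add: inverse_eq_divide)
qed

lemma psd_bounds: assumes "\<bar>X\<bar> \<le> dl / 2" shows "1/2 \<le> psd X" "psd X \<le> 2"
proof -
  have p: "\<bar>ps X\<bar> \<le> dl" using ps_abs(3)[of X] assms by auto
  note B = phd_bounds[OF p]
  have "1 / 2 \<le> 1 / phd (ps X)" using B by (intro divide_left_mono) auto
  then show "1/2 \<le> psd X" unfolding psd_def .
  have "1 / phd (ps X) \<le> 1 / (1/2)" using B by (intro divide_left_mono) auto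
  then show "psd X \<le> 2" unfolding psd_def by simp
qed

lemma isCont_psd: assumes "\<bar>X\<bar> < dl / 2" shows "isCont psd X"
proof -
  have p: "\<bar>ps X\<bar> \<le> dl" using ps_abs(3)[of X] assms by auto
  have "isCont (\<lambda>X. phd (ps X)) X"
    by (rule isCont_o2[OF isCont_ps[OF assms] isCont_phd[OF p]])
  then show ?thesis unfolding psd_def[abs_def] using phd_bounds[OF p]
    by (intro continuous_intros) auto
qed

definition C3 :: real where "C3 = 2 * (a 1 ^ 2 + 4 * (C1 + \<bar>a 1\<bar> * M1) * (1 + \<bar>a 1\<bar>))"

lemma C1_nonneg: "0 \<le> C1" unfolding C1_def using M1_nonneg M2_nonneg by auto

lemma psd_approx: assumes "\<bar>X\<bar> \<le> dl / 2" shows "\<bar>psd X - 1 + a 1 * X\<bar> \<le> C3 * X ^ 2"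
proof -
  define x where "x = ps X"
  have xd: "\<bar>x\<bar> \<le> dl" and xX: "ph x = X" and x2: "\<bar>x\<bar> \<le> 2 * \<bar>X\<bar>"
    unfolding x_def using ps_abs ps_props assms by auto
  have X1: "\<bar>X\<bar> \<le> 1" using assms dl_le1 by auto
  define E where "E = 4 * (C1 + \<bar>a 1\<bar> * M1)"
  have E0: "0 \<le> E" unfolding E_def using C1_nonneg M1_nonneg by auto
  have xx: "x ^ 2 \<le> 4 * X ^ 2"
  proof -
    have "\<bar>x\<bar> ^ 2 \<le> (2 * \<bar>X\<bar>) ^ 2" using x2 by (intro power_mono) auto
    then show ?thesis by (simp add: power_mult_distrib)
  qed
  define e where "e = phd x - 1 - a 1 * X"
  have "\<bar>e\<bar> \<le> \<bar>phd x - 1 - a 1 * x\<bar> + \<bar>a 1\<bar> * \<bar>ph x - x\<bar>"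
    unfolding e_def xX[symmetric] by (simp add: abs_mult[symmetric] algebra_simps abs_triangle_ineq[THEN order.trans])
  also have "\<dots> \<le> C1 * x ^ 2 + \<bar>a 1\<bar> * (M1 * x ^ 2)"
    using phd_approx[OF xd] ph_approx[OF xd] by (intro add_mono mult_left_mono) auto
  also have "\<dots> = (C1 + \<bar>a 1\<bar> * M1) * x ^ 2" by (simp add: algebra_simps)
  also have "\<dots> \<le> (C1 + \<bar>a 1\<bar> * M1) * (4 * X ^ 2)" using xx C1_nonneg M1_nonneg by (intro mult_left_mono) auto
  finally have eb0: "\<bar>e\<bar> \<le> (C1 + \<bar>a 1\<bar> * M1) * (4 * X ^ 2)" .
  have eb: "\<bar>e\<bar> \<le> E * X ^ 2" using eb0 unfolding E_def by (simp add: algebra_simps)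
  have pd: "1/2 \<le> phd x" using phd_bounds[OF xd] by auto
  have "psd X - 1 + a 1 * X = (a 1 ^ 2 * X ^ 2 - e * (1 - a 1 * X)) / phd x"
    unfolding psd_def x_def[symmetric] e_def using pd by (simp add: field_simps power2_eq_square)
  also have "\<bar>\<dots>\<bar> = \<bar>a 1 ^ 2 * X ^ 2 - e * (1 - a 1 * X)\<bar> / phd x" using pd by (simp add: abs_div)
  also have "\<dots> \<le> \<bar>a 1 ^ 2 * X ^ 2 - e * (1 - a 1 * X)\<bar> / (1/2)"
    using pd by (intro divide_left_mono) auto
  also have "\<dots> \<le> (a 1 ^ 2 * X ^ 2 + E * X ^ 2 * (1 + \<bar>a 1\<bar>)) / (1/2)"
  proof (intro divide_right_mono)
    have "\<bar>1 - a 1 * X\<bar> \<le> 1 + \<bar>a 1\<bar>"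
    proof -
      have "\<bar>a 1 * X\<bar> \<le> \<bar>a 1\<bar> * 1" unfolding abs_mult using X1 by (intro mult_left_mono) auto
      then show ?thesis by (smt (verit))
    qed
    then have "\<bar>e * (1 - a 1 * X)\<bar> \<le> E * X ^ 2 * (1 + \<bar>a 1\<bar>)" unfolding abs_mult
      using eb E0 by (intro mult_mono) auto
    then show "\<bar>a 1 ^ 2 * X ^ 2 - e * (1 - a 1 * X)\<bar> \<le> a 1 ^ 2 * X ^ 2 + E * X ^ 2 * (1 + \<bar>a 1\<bar>)"
      by (smt (verit) abs_triangle_ineq4 zero_le_power2 mult_nonneg_nonneg abs_mult abs_power2)
  qed simp
  also have "\<dots> = C3 * X ^ 2" unfolding C3_def E_def by (simp add: algebra_simps)
  finally show ?thesis .
qed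


definition oddzero :: bool where "oddzero \<longleftrightarrow> (\<forall>i\<in>{1..n-2}. odd i \<longrightarrow> a i = 0)"

lemma Ap_even: assumes oddzero shows "Ap (-x) = Ap x"
  unfolding Ap_def
proof (intro sum.cong refl)
  fix i assume "i \<in> {1..n-2}"
  then show "a i * (-x) ^ i = a i * x ^ i" using assms unfolding oddzero_def
    by (cases "even i") auto
qed

lemma Apd_odd: assumes oddzero shows "Apd (-x) = - Apd x"
  unfolding Apd_def sum_negf[symmetric]
proof (intro sum.cong refl)
  fix i assume i: "i \<in> {1..n-2}"
  show "a i * (real i * (-x) ^ (i - 1)) = - (a i * (real i * x ^ (i - 1)))"
  proof (cases "even i")
    case True
    then have "odd (i - 1)" using i by auto
    then show ?thesis by simp
  next
    case False then show ?thesis using assms i unfolding oddzero_def by auto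
  qed
qed

lemma ph_odd: assumes oddzero shows "ph (-x) = - ph x"
  unfolding ph_def qq_def using Ap_even[OF assms] by simp

lemma phd_even: assumes oddzero shows "phd (-x) = phd x"
  unfolding phd_def qq_def using Ap_even[OF assms] Apd_odd[OF assms] by simp

lemma ps_odd: assumes oddzero "\<bar>X\<bar> \<le> dl / 2" shows "ps (-X) = - ps X"
proof -
  have p: "\<bar>ps X\<bar> \<le> dl" "\<bar>- ps X\<bar> \<le> dl" using ps_props[OF assms(2)] by auto
  have "ps (-X) = ps (ph (- ps X))" using ph_odd[OF assms(1)] ps_props(2)[OF assms(2)] by simp
  also have "\<dots> = - ps X" by (rule ps_ph[OF p(2)])
  finally show ?thesis .
qed

lemma psd_even: assumes oddzero "\<bar>X\<bar> \<le> dl / 2" shows "psd (-X) = psd X"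
  unfolding psd_def using ps_odd[OF assms] phd_even[OF assms(1)] by simp

end

context osc begin

definition HH :: "real \<times> real \<Rightarrow> real" where
  "HH = (\<lambda>(x, y). y ^ 2 + x ^ 2 + (\<Sum>k = 1..n - 2. a k * x ^ (k + 2)))"

lemma HH_eq: "HH (x, y) = y ^ 2 + FF x" unfolding HH_def FF_def by simp

definition t0 :: real where "t0 = (dl / 4) ^ 2"
lemma t0_pos: "0 < t0" unfolding t0_def using dl_pos by simp

definition Oval :: "real \<Rightarrow> (real \<times> real) set" where
  "Oval t = {(x, y). \<bar>x\<bar> < dl \<and> y ^ 2 + FF x = t}"
definition Dom :: "real \<Rightarrow> (real \<times> real) set" where
  "Dom t = {(x, y). \<bar>x\<bar> < dl \<and> y ^ 2 + FF x < t}"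

lemma continuous_HH: "continuous_on UNIV HH"
  unfolding HH_def by (auto intro!: continuous_intros simp: case_prod_beta)

lemma ph_sq_mono: assumes "\<bar>x\<bar> \<le> dl" "0 \<le> s" "s \<le> 1"
  shows "ph (s * x) ^ 2 \<le> ph x ^ 2" "s < 1 \<Longrightarrow> x \<noteq> 0 \<Longrightarrow> ph (s * x) ^ 2 < ph x ^ 2"
proof -
  have "s * \<bar>x\<bar> \<le> 1 * \<bar>x\<bar>" using assms by (intro mult_right_mono) auto
  then have sx: "\<bar>s * x\<bar> \<le> dl" using assms by (simp add: abs_mult)
  have le: "\<bar>ph (s * x)\<bar> \<le> \<bar>ph x\<bar> \<and> (s < 1 \<longrightarrow> x \<noteq> 0 \<longrightarrow> \<bar>ph (s * x)\<bar> < \<bar>ph x\<bar>)"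
  proof (cases "0 \<le> x")
    case True
    have a: "0 \<le> ph (s * x)"
      using ph_mono[of 0 "s*x"] True assms sx dl_pos by (cases "s * x = 0") (auto simp: less_le)
    have sxx: "s * x \<le> x" using True assms mult_left_le_one_le by auto
    have b: "ph (s * x) \<le> ph x"
    proof (cases "s * x = x")
      case False
      then show ?thesis using ph_mono[of "s*x" x] sxx True assms sx dl_pos
        by (smt (verit) mult_nonneg_nonneg)
    next
      case True then show ?thesis by (metis order.refl)
    qed
    have c: "s < 1 \<longrightarrow> x \<noteq> 0 \<longrightarrow> ph (s * x) < ph x"
    proof (intro impI)
      assume "s < 1" "x \<noteq> 0"
      then have "s * x < 1 * x" using True by (intro mult_strict_right_mono) auto
      moreover have "-dl \<le> s * x" using mult_nonneg_nonneg[of s x] True assms(2) dl_pos by linarith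
      ultimately show "ph (s * x) < ph x" using ph_mono[of "s*x" x] assms by auto
    qed
    show ?thesis using a b c by auto
  next
    case False
    have a: "ph (s * x) \<le> 0"
      using ph_mono[of "s*x" 0] False assms sx dl_pos by (cases "s * x = 0") (auto simp: less_le mult_nonneg_nonpos)
    have b: "ph x \<le> ph (s * x)" using ph_mono[of x "s*x"] False assms sx
      by (cases "s * x = x") (auto simp: less_le mult_le_cancel_right1)
    have c: "s < 1 \<longrightarrow> x \<noteq> 0 \<longrightarrow> ph x < ph (s * x)" using ph_mono[of x "s*x"] False assms sx
      by (auto simp: mult_less_cancel_right1)
    show ?thesis using a b c by auto
  qed
  show "ph (s * x) ^ 2 \<le> ph x ^ 2" using le by (simp add: abs_le_square_iff)
  show "s < 1 \<Longrightarrow> x \<noteq> 0 \<Longrightarrow> ph (s * x) ^ 2 < ph x ^ 2"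
  proof -
    assume "s < 1" "x \<noteq> 0"
    then have "\<bar>ph (s * x)\<bar> ^ 2 < \<bar>ph x\<bar> ^ 2" using le by (intro power_strict_mono) auto
    then show ?thesis by simp
  qed
qed

lemma Dom_scale: assumes "(x, y) \<in> Dom t" "0 \<le> s" "s \<le> 1" shows "(s * x, s * y) \<in> Dom t"
proof -
  have x: "\<bar>x\<bar> < dl" "y ^ 2 + FF x < t" using assms(1) unfolding Dom_def by auto
  have "s * \<bar>x\<bar> \<le> 1 * \<bar>x\<bar>" using assms by (intro mult_right_mono) auto
  then have sx: "\<bar>s * x\<bar> < dl" using x assms by (simp add: abs_mult)
  have "s ^ 2 \<le> 1" using assms by (simp add: power_le_one)
  then have "s ^ 2 * y ^ 2 \<le> 1 * y ^ 2" by (intro mult_right_mono) auto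
  then have "(s * y) ^ 2 \<le> y ^ 2" by (simp add: power_mult_distrib)
  moreover have "FF (s * x) \<le> FF x" using FF_ph[of x] FF_ph[of "s*x"] sx x ph_sq_mono[of x s] assms by auto
  ultimately show ?thesis using x sx unfolding Dom_def by auto
qed

lemma Dom_open: "open (Dom t)"
proof -
  have "Dom t = {p. \<bar>fst p\<bar> < dl} \<inter> {p. HH p < t}"
    unfolding Dom_def using HH_eq by auto
  moreover have "open {p::real\<times>real. \<bar>fst p\<bar> < dl}"
    by (rule open_Collect_less) (auto intro!: continuous_intros)
  moreover have "open {p. HH p < t}"
    by (rule open_Collect_less) (auto intro!: continuous_intros continuous_HH)
  ultimately show ?thesis by auto
qed

lemma Dom_connected: assumes "0 < t" shows "connected (Dom t)"
proof (rule starlike_imp_connected)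
  have 0: "(0, 0) \<in> Dom t" using assms dl_pos unfolding Dom_def FF_def by simp
  show "starlike (Dom t)" unfolding starlike_def
  proof (intro bexI[OF _ 0] ballI subsetI)
    fix p q assume p: "p \<in> Dom t" and q: "q \<in> closed_segment (0, 0) p"
    obtain u where u: "0 \<le> u" "u \<le> 1" "q = u *\<^sub>R p" using q by (auto simp: in_segment zero_prod_def[symmetric])
    obtain x y where "p = (x, y)" by force
    then show "q \<in> Dom t" using Dom_scale[of x y t u] p u by simp
  qed
qed

lemma FF_big: assumes "dl / 2 \<le> \<bar>x\<bar>" "\<bar>x\<bar> \<le> dl" shows "t0 < FF x"
proof -
  have "3/4 * (dl/2) \<le> \<bar>ph x\<bar>" using ph_abs(1)[OF assms(2)] assms(1) by linarith
  then have "(3/4 * (dl/2)) ^ 2 \<le> \<bar>ph x\<bar> ^ 2" using dl_pos by (intro power_mono) auto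
  moreover have "t0 < (3/4 * (dl/2)) ^ 2" unfolding t0_def using dl_pos by (simp add: power2_eq_square)
  ultimately show ?thesis using FF_ph[OF assms(2)] by simp
qed

lemma component_Dom: assumes "0 < t" "t < t0"
  shows "connected_component_set {p. HH p < t} (0, 0) = Dom t"
proof
  have 0: "(0, 0) \<in> Dom t" using assms dl_pos unfolding Dom_def FF_def by simp
  show "Dom t \<subseteq> connected_component_set {p. HH p < t} (0, 0)"
    by (rule connected_component_maximal[OF 0 Dom_connected[OF assms(1)]])
       (auto simp: Dom_def HH_eq)
  define C where "C = connected_component_set {p. HH p < t} (0, 0)"
  have Cc: "connected C" unfolding C_def by (rule connected_connected_component)
  have CS: "C \<subseteq> {p. HH p < t}" unfolding C_def by (rule connected_component_subset)
  have C0: "(0, 0) \<in> C" unfolding C_def using 0 by (auto simp: Dom_def HH_eq)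
  define U where "U = {p::real\<times>real. \<bar>fst p\<bar> < dl}"
  define V where "V = {p::real\<times>real. dl / 2 < \<bar>fst p\<bar>}"
  have oU: "open U" unfolding U_def by (rule open_Collect_less) (auto intro!: continuous_intros)
  have oV: "open V" unfolding V_def by (rule open_Collect_less) (auto intro!: continuous_intros)
  have UV: "U \<inter> V \<inter> C = {}"
  proof (rule ccontr)
    assume "U \<inter> V \<inter> C \<noteq> {}"
    then obtain x y where xy: "(x, y) \<in> U" "(x, y) \<in> V" "(x, y) \<in> C" by auto
    then have "HH (x, y) < t" using CS by auto
    moreover have "t0 < FF x" using xy unfolding U_def V_def by (intro FF_big) auto
    ultimately show False using assms HH_eq[of x y] by (smt (verit) zero_le_power2)
  qed
  have CUV: "C \<subseteq> U \<union> V" unfolding U_def V_def using dl_pos by auto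
  have "U \<inter> C = {} \<or> V \<inter> C = {}" by (rule connectedD[OF Cc oU oV UV CUV])
  moreover have "(0, 0) \<in> U \<inter> C" using C0 dl_pos unfolding U_def by simp
  then have "U \<inter> C \<noteq> {}" by blast
  ultimately have "C \<subseteq> U" using CUV by auto
  then show "C \<subseteq> Dom t" using CS unfolding U_def Dom_def by (auto simp: HH_eq)
qed

lemma central_oval_eq: assumes "0 < t" "t < t0" shows "central_oval HH t = Oval t"
proof -
  have fr: "central_oval HH t = closure (Dom t) - Dom t"
    unfolding central_oval_def component_Dom[OF assms] frontier_def interior_open[OF Dom_open] ..
  have cl: "closure (Dom t) \<subseteq> {p. \<bar>fst p\<bar> \<le> dl \<and> HH p \<le> t}"
  proof (rule closure_minimal)
    show "Dom t \<subseteq> {p. \<bar>fst p\<bar> \<le> dl \<and> HH p \<le> t}" unfolding Dom_def by (auto simp: HH_eq)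
    have "closed {p::real\<times>real. \<bar>fst p\<bar> \<le> dl}" by (rule closed_Collect_le) (auto intro!: continuous_intros)
    moreover have "closed {p. HH p \<le> t}" by (rule closed_Collect_le) (auto intro!: continuous_intros continuous_HH)
    ultimately show "closed {p. \<bar>fst p\<bar> \<le> dl \<and> HH p \<le> t}" by (simp add: Collect_conj_eq closed_Int)
  qed
  show ?thesis
  proof
    show "central_oval HH t \<subseteq> Oval t"
    proof
      fix p assume "p \<in> central_oval HH t"
      then have p: "p \<in> closure (Dom t)" "p \<notin> Dom t" using fr by auto
      obtain x y where pxy: "p = (x, y)" by force
      have h: "\<bar>x\<bar> \<le> dl" "y ^ 2 + FF x \<le> t" using cl p pxy by (auto simp: HH_eq)
      have "\<bar>x\<bar> \<noteq> dl"
      proof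
        assume "\<bar>x\<bar> = dl"
        then have "t0 < FF x" using dl_pos by (intro FF_big) auto
        then show False using h assms by (smt (verit) zero_le_power2)
      qed
      then show "p \<in> Oval t" using h p pxy unfolding Oval_def Dom_def by auto
    qed
    show "Oval t \<subseteq> central_oval HH t"
    proof
      fix p assume pO: "p \<in> Oval t"
      obtain x y where pxy: "p = (x, y)" by force
      have h: "\<bar>x\<bar> < dl" "y ^ 2 + FF x = t" using pO pxy unfolding Oval_def by auto
      have nD: "p \<notin> Dom t" using h pxy unfolding Dom_def by auto
      have p0: "p \<noteq> 0"
      proof
        assume "p = 0" then have "x = 0" "y = 0" using pxy by (auto simp: zero_prod_def)
        then show False using h assms unfolding FF_def by simp
      qed
      have "p \<in> closure (Dom t)" unfolding closure_approachable
      proof (intro allI impI)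
        fix e :: real assume e: "0 < e"
        define s where "s = min (1/2) (e / (norm p + 1))"
        have np: "0 < norm p + 1" by (simp add: add_nonneg_pos)
        have s12: "s \<le> 1/2" unfolding s_def by (rule min.cobounded1)
        have s: "0 < s" "s \<le> 1/2" "s < 1" using e np s12 by (auto simp: s_def)
        have q: "((1 - s) * x, (1 - s) * y) \<in> Dom t"
        proof -
          have "(1 - s) * \<bar>x\<bar> \<le> 1 * \<bar>x\<bar>" using s by (intro mult_right_mono) auto
          then have ax: "\<bar>(1 - s) * x\<bar> < dl" using h s by (simp add: abs_mult)
          have "(1 - s) ^ 2 \<le> 1" using s by (simp add: power_le_one)
          then have "(1 - s) ^ 2 * y ^ 2 \<le> 1 * y ^ 2" by (intro mult_right_mono) auto
          then have y2: "((1 - s) * y) ^ 2 \<le> y ^ 2" by (simp add: power_mult_distrib)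
          have F2: "FF ((1 - s) * x) \<le> FF x" using FF_ph[of x] FF_ph[of "(1-s)*x"] ax h ph_sq_mono(1)[of x "1-s"] s by auto
          have strict: "((1 - s) * y) ^ 2 < y ^ 2 \<or> FF ((1 - s) * x) < FF x"
          proof (cases "y = 0")
            case True
            then have "x \<noteq> 0" using p0 pxy by (auto simp: zero_prod_def)
            then show ?thesis using FF_ph[of x] FF_ph[of "(1-s)*x"] ax h ph_sq_mono(2)[of x "1-s"] s by auto
          next
            case False
            have "(1 - s) ^ 2 < 1" using s by (simp add: power_less_one_iff)
            then have "(1 - s) ^ 2 * y ^ 2 < 1 * y ^ 2" using False by (intro mult_strict_right_mono) auto
            then show ?thesis by (simp add: power_mult_distrib)
          qed
          show ?thesis using ax y2 F2 strict h unfolding Dom_def by auto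
        qed
        moreover have "dist ((1 - s) * x, (1 - s) * y) p < e"
        proof -
          have "((1 - s) * x, (1 - s) * y) - p = (- s) *\<^sub>R p" using pxy by (simp add: algebra_simps)
          then have "dist ((1 - s) * x, (1 - s) * y) p = s * norm p" using s by (simp add: dist_norm)
          also have "\<dots> \<le> e / (norm p + 1) * norm p" unfolding s_def by (intro mult_right_mono) auto
          also have "\<dots> < e"
          proof -
            have "e * norm p < e * (norm p + 1)" using e by simp
            then show ?thesis using np by (simp add: field_simps)
          qed
          finally show ?thesis .
        qed
        ultimately show "\<exists>q\<in>Dom t. dist q p < e" by blast
      qed
      then show "p \<in> central_oval HH t" using fr nD by auto
    qed
  qed
qed

end


lemma global_antideriv:
  fixes f :: "real \<Rightarrow> real"
  assumes cf: "\<And>x. isCont f x"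
  shows "\<exists>K. (\<forall>x. (K has_real_derivative f x) (at x)) \<and> (\<forall>a b. a \<le> b \<longrightarrow> integral {a..b} f = K b - K a)"
proof -
  have cont: "continuous_on S f" for S using cf by (simp add: continuous_at_imp_continuous_on)
  have intg: "f integrable_on {a..b}" for a b by (rule integrable_continuous_real[OF cont])
  define K where "K x = integral {-(\<bar>x\<bar>+1)..x} f - integral {-(\<bar>x\<bar>+1)..0} f" for x
  have Kd: "(K has_real_derivative f x0) (at x0)" for x0
  proof -
    define c where "c = -(\<bar>x0\<bar> + 2)"
    have loc: "K y = integral {c..y} f - integral {c..0} f" if "y \<in> {x0 - 1<..<x0 + 1}" for y
    proof -
      have c1: "c \<le> -(\<bar>y\<bar>+1)" using that unfolding c_def by auto
      have "integral {c..-(\<bar>y\<bar>+1)} f + integral {-(\<bar>y\<bar>+1)..y} f = integral {c..y} f"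
        using c1 by (intro Henstock_Kurzweil_Integration.integral_combine intg) auto
      moreover have "integral {c..-(\<bar>y\<bar>+1)} f + integral {-(\<bar>y\<bar>+1)..0} f = integral {c..0} f"
        using c1 by (intro Henstock_Kurzweil_Integration.integral_combine intg) auto
      ultimately show ?thesis unfolding K_def by linarith
    qed
    have "((\<lambda>y. integral {c..y} f) has_real_derivative f x0) (at x0 within {c..x0+1})"
      by (rule integral_has_real_derivative[OF cont]) (auto simp: c_def)
    then have "((\<lambda>y. integral {c..y} f) has_real_derivative f x0) (at x0 within {c<..<x0+1})"
      by (rule DERIV_subset) auto
    then have "((\<lambda>y. integral {c..y} f) has_real_derivative f x0) (at x0)"
      by (subst (asm) at_within_open) (auto simp: c_def)
    then have "((\<lambda>y. integral {c..y} f - integral {c..0} f) has_real_derivative f x0 - 0) (at x0)"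
      by (intro derivative_intros)
    then have "((\<lambda>y. integral {c..y} f - integral {c..0} f) has_real_derivative f x0) (at x0)" by simp
    then show ?thesis
    proof (rule has_field_derivative_transform_within_open[where S="{x0 - 1<..<x0 + 1}"])
      show "open {x0 - 1<..<x0 + 1}" by simp
      show "x0 \<in> {x0 - 1<..<x0 + 1}" by simp
      fix y assume "y \<in> {x0 - 1<..<x0 + 1}"
      then show "integral {c..y} f - integral {c..0} f = K y" using loc by simp
    qed
  qed
  have "integral {a..b} f = K b - K a" if "a \<le> b" for a b
  proof -
    have "(f has_integral K b - K a) {a..b}"
    proof (rule fundamental_theorem_of_calculus[OF that])
      fix x assume "x \<in> {a..b}"
      have "(K has_real_derivative f x) (at x within {a..b})" by (rule has_field_derivative_at_within[OF Kd])
      then show "(K has_vector_derivative f x) (at x within {a..b})"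
        by (simp add: has_real_derivative_iff_has_vector_derivative)
    qed
    then show ?thesis by (rule integral_unique)
  qed
  then show ?thesis using Kd by blast
qed

lemma antideriv_periodic:
  fixes f K :: "real \<Rightarrow> real"
  assumes Kd: "\<And>x. (K has_real_derivative f x) (at x)"
    and KI: "\<And>a b. a \<le> b \<Longrightarrow> integral {a..b} f = K b - K a"
    and per: "\<And>x. f (x - 2 * pi) = f x"
  shows "K u - K (u - 2 * pi) = integral {0..2*pi} f"
proof -
  have "\<exists>c. \<forall>x\<in>UNIV. K x - K (x - 2 * pi) = c"
  proof (rule has_field_derivative_zero_constant)
    fix x :: real
    have "((\<lambda>x. K x - K (x - 2 * pi)) has_real_derivative f x - f (x - 2 * pi) * (1 - 0)) (at x)"
      by (intro derivative_intros Kd DERIV_chain2[OF Kd])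
    then show "((\<lambda>x. K x - K (x - 2 * pi)) has_real_derivative 0) (at x within UNIV)"
      using per by simp
  qed auto
  then obtain c where c: "\<And>x. K x - K (x - 2 * pi) = c" by blast
  have "integral {0..2*pi} f = K (2*pi) - K 0" by (rule KI) simp
  then show ?thesis using c[of u] c[of "2*pi"] by simp
qed



lemma hvd_fst: "(g has_vector_derivative v) F \<Longrightarrow> ((\<lambda>s. fst (g s)) has_real_derivative fst v) F"
  unfolding has_vector_derivative_def has_field_derivative_def
  by (drule has_derivative_fst) (simp, subst (asm) mult.commute, simp)

lemma hvd_snd: "(g has_vector_derivative v) F \<Longrightarrow> ((\<lambda>s. snd (g s)) has_real_derivative snd v) F"
  unfolding has_vector_derivative_def has_field_derivative_def
  by (drule has_derivative_snd) (simp, subst (asm) mult.commute, simp)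

context osc begin

lemma ham_HH: "ham_field HH p = (2 * snd p, - FFd (fst p))"
proof -
  obtain x y where p: "p = (x, y)" by force
  have "((\<lambda>y. HH (x, y)) has_real_derivative 2 * y) (at y)"
    unfolding HH_eq by (auto intro!: derivative_eq_intros)
  then have 1: "deriv (\<lambda>y. HH (x, y)) y = 2 * y" by (rule DERIV_imp_deriv)
  have "((\<lambda>x. HH (x, y)) has_real_derivative 0 + FFd x) (at x)"
    unfolding HH_eq by (intro derivative_intros DERIV_FF)
  then have 2: "deriv (\<lambda>x. HH (x, y)) x = FFd x" by (simp add: DERIV_imp_deriv)
  show ?thesis unfolding ham_field_def p using 1 2 by simp
qed

lemma flow_facts:
  assumes t: "0 < t" "t < t0" and op: "oval_param HH t g P"
  shows "0 < P" "\<And>s. ((\<lambda>s. fst (g s)) has_real_derivative 2 * snd (g s)) (at s)"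
    "\<And>s. ((\<lambda>s. snd (g s)) has_real_derivative - FFd (fst (g s))) (at s)"
    "\<And>s. s \<in> {0..P} \<Longrightarrow> \<bar>fst (g s)\<bar> < dl \<and> snd (g s) ^ 2 + FF (fst (g s)) = t"
    "g P = g 0" "inj_on g {0..<P}"
    "\<And>s. fst (vector_derivative g (at s)) = 2 * snd (g s)"
proof -
  note O = op[unfolded oval_param_def central_oval_eq[OF t]]
  show "0 < P" "g P = g 0" "inj_on g {0..<P}" using O by auto
  fix s
  have d: "(g has_vector_derivative (2 * snd (g s), - FFd (fst (g s)))) (at s)"
    using O ham_HH by metis
  show "((\<lambda>s. fst (g s)) has_real_derivative 2 * snd (g s)) (at s)" using hvd_fst[OF d] by simp
  show "((\<lambda>s. snd (g s)) has_real_derivative - FFd (fst (g s))) (at s)" using hvd_snd[OF d] by simp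
  show "fst (vector_derivative g (at s)) = 2 * snd (g s)" using vector_derivative_at[OF d] by simp
  assume s: "s \<in> {0..P}"
  have "g s \<in> Oval t"
  proof (cases "s = P")
    case True
    have "g 0 \<in> g ` {0..<P}" using O by auto
    then show ?thesis using O True by auto
  next
    case False
    then have "g s \<in> g ` {0..<P}" using s by auto
    then show ?thesis using O by auto
  qed
  then show "\<bar>fst (g s)\<bar> < dl \<and> snd (g s) ^ 2 + FF (fst (g s)) = t" unfolding Oval_def by auto
qed

end

context osc begin

definition hk :: "nat \<Rightarrow> real \<Rightarrow> real \<Rightarrow> real" where
  "hk k r \<theta> = ps (r * cos \<theta>) ^ k * psd (r * cos \<theta>)"
definition Vk :: "nat \<Rightarrow> real \<Rightarrow> real" where
  "Vk k r = integral {0..2*pi} (hk k r)"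

lemma isCont_hk: assumes "0 \<le> r" "r < dl / 2" shows "isCont (hk k r) \<theta>"
proof -
  have c: "\<bar>r * cos \<theta>\<bar> < dl / 2"
  proof -
    have "r * \<bar>cos \<theta>\<bar> \<le> r * 1" using assms abs_cos_le_one[of \<theta>] by (intro mult_left_mono) auto
    then have "\<bar>r * cos \<theta>\<bar> \<le> r * 1" using assms by (simp add: abs_mult)
    then show ?thesis using assms by simp
  qed
  have rc: "isCont (\<lambda>\<theta>. r * cos \<theta>) \<theta>" by (intro continuous_intros)
  have "isCont (\<lambda>\<theta>. ps (r * cos \<theta>)) \<theta>" using isCont_o2[OF rc isCont_ps[OF c]] by simp
  moreover have "isCont (\<lambda>\<theta>. psd (r * cos \<theta>)) \<theta>" using isCont_o2[OF rc isCont_psd[OF c]] by simp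
  ultimately show ?thesis unfolding hk_def[abs_def] by (intro continuous_intros)
qed

lemma hk_per: "hk k r (\<theta> - 2 * pi) = hk k r \<theta>"
  unfolding hk_def by (simp add: cos_diff)

lemma Vk_antideriv: assumes "0 \<le> r" "r < dl / 2"
  obtains K where "\<And>x. (K has_real_derivative hk k r x) (at x)"
    "\<And>u. K u - K (u - 2 * pi) = Vk k r"
proof -
  obtain K where K: "\<And>x. (K has_real_derivative hk k r x) (at x)"
    "\<And>a b. a \<le> b \<Longrightarrow> integral {a..b} (hk k r) = K b - K a"
    using global_antideriv[of "hk k r"] isCont_hk[OF assms] by blast
  show ?thesis
    by (rule that[OF K(1)]) (unfold Vk_def, rule antideriv_periodic[OF K(1) K(2) hk_per])
qed

lemma finite_sin_zeros: "finite {\<theta>::real. \<theta> \<in> {lo..hi} \<and> sin \<theta> = 0}"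
proof -
  have "{\<theta>::real. \<theta> \<in> {lo..hi} \<and> sin \<theta> = 0} \<subseteq> (\<lambda>j::int. of_int j * pi) ` {\<lfloor>lo / pi\<rfloor>..\<lceil>hi / pi\<rceil>}"
  proof
    fix \<theta> assume th: "\<theta> \<in> {\<theta>::real. \<theta> \<in> {lo..hi} \<and> sin \<theta> = 0}"
    then obtain j :: int where j: "\<theta> = of_int j * pi" using sin_zero_iff_int2 by auto
    have "lo / pi \<le> of_int j" "of_int j \<le> hi / pi" using th j by (auto simp: field_simps)
    then have "\<lfloor>lo / pi\<rfloor> \<le> j" "j \<le> \<lceil>hi / pi\<rceil>" by linarith+
    then show "\<theta> \<in> (\<lambda>j::int. of_int j * pi) ` {\<lfloor>lo / pi\<rfloor>..\<lceil>hi / pi\<rceil>}" using j by auto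
  qed
  then show ?thesis by (rule finite_subset) auto
qed

lemma valid_integral:
  assumes t: "0 < t" "t < t0" and op: "oval_param HH t g P"
  shows "integral {0..P} (\<lambda>s. 2 * fst (g s) ^ k) = Vk k (sqrt t)"
    "integral {0..P} (\<lambda>s. fst (g s) ^ k / snd (g s) * fst (vector_derivative g (at s))) = Vk k (sqrt t)"
proof -
  note F = flow_facts[OF t op]
  define r where "r = sqrt t"
  have r0: "0 < r" unfolding r_def using t by simp
  have rt: "r ^ 2 = t" unfolding r_def using t by simp
  have rdl: "r < dl / 4"
  proof -
    have "r < sqrt t0" unfolding r_def using t by simp
    then show ?thesis unfolding t0_def using dl_pos by simp
  qed
  define x where "x s = fst (g s)" for s
  define y where "y s = snd (g s)" for s
  have xd: "(x has_real_derivative 2 * y s) (at s)" for s unfolding x_def y_def using F(2) .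
  have yd: "(y has_real_derivative - FFd (x s)) (at s)" for s unfolding x_def y_def using F(3) .
  have onO: "\<bar>x s\<bar> < dl" "y s ^ 2 + ph (x s) ^ 2 = t" if "s \<in> {0..P}" for s
    using F(4)[OF that] FF_ph[of "x s"] unfolding x_def y_def by auto
  have xc: "isCont x s" for s using xd DERIV_isCont by blast
  define om where "om s = 2 * phd (x s)" for s
  have omc: "continuous_on {0..P} om"
  proof (intro continuous_at_imp_continuous_on ballI)
    fix s assume "s \<in> {0..P}"
    then have "\<bar>x s\<bar> \<le> dl" using onO(1)[of s] by auto
    then have "isCont (\<lambda>s. phd (x s)) s" by (rule isCont_o2[OF xc isCont_phd])
    then show "isCont om s" unfolding om_def[abs_def] by (intro continuous_intros)
  qed
  have omb: "1 \<le> om s" "om s \<le> 4" if "s \<in> {0..P}" for s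
    using phd_bounds[of "x s"] onO[OF that] unfolding om_def by auto
  have omi: "om integrable_on {a..b}" if "{a..b} \<subseteq> {0..P}" for a b
    by (rule integrable_continuous_real) (use omc that continuous_on_subset in blast)
  have "(ph (x 0) / r) ^ 2 + (y 0 / r) ^ 2 = (y 0 ^ 2 + ph (x 0) ^ 2) / r ^ 2"
    by (simp add: power_divide add_divide_distrib)
  also have "\<dots> = 1" using onO(2)[of 0] F(1) rt t by simp
  finally have "(ph (x 0) / r) ^ 2 + (y 0 / r) ^ 2 = 1" .
  then obtain th0 where th0: "ph (x 0) / r = cos th0" "y 0 / r = sin th0"
    using sincos_total_2pi by metis
  define Th where "Th s = th0 - integral {0..s} om" for s
  have Th0: "Th 0 = th0" unfolding Th_def by simp
  have Thd: "(Th has_real_derivative - om s) (at s within {0..P})" if "s \<in> {0..P}" for s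
  proof -
    have "((\<lambda>s. integral {0..s} om) has_real_derivative om s) (at s within {0..P})"
      by (rule integral_has_real_derivative[OF omc that])
    then show ?thesis unfolding Th_def[abs_def] by (intro derivative_eq_intros) auto
  qed
  have Thc: "continuous_on {0..P} Th"
    unfolding Th_def[abs_def] by (intro continuous_intros indefinite_integral_continuous_1 omi) auto
  have Th_diff: "Th s1 - Th s2 = integral {s1..s2} om" if "0 \<le> s1" "s1 \<le> s2" "s2 \<le> P" for s1 s2
  proof -
    have "integral {0..s1} om + integral {s1..s2} om = integral {0..s2} om"
      using that by (intro Henstock_Kurzweil_Integration.integral_combine omi) auto
    then show ?thesis unfolding Th_def by simp
  qed
  have Th_dec: "s2 - s1 \<le> Th s1 - Th s2" if "0 \<le> s1" "s1 \<le> s2" "s2 \<le> P" for s1 s2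
  proof -
    have "integral {s1..s2} (\<lambda>_. 1::real) \<le> integral {s1..s2} om"
      using that omb by (intro integral_le omi) auto
    then show ?thesis using that Th_diff by simp
  qed
  have Th_inj: "inj_on Th {0..P}"
  proof (rule inj_onI)
    fix s1 s2 assume s: "s1 \<in> {0..P}" "s2 \<in> {0..P}" "Th s1 = Th s2"
    show "s1 = s2"
    proof (rule ccontr)
      assume "s1 \<noteq> s2"
      then consider "s1 < s2" | "s2 < s1" by linarith
      then show False
      proof cases
        case 1 then show False using Th_dec[of s1 s2] s by auto
      next
        case 2 then show False using Th_dec[of s2 s1] s by auto
      qed
    qed
  qed
  define E where "E s = (ph (x s) - r * cos (Th s)) ^ 2 + (y s - r * sin (Th s)) ^ 2" for s
  have Ed: "(E has_real_derivative 0) (at s within {0..P})" if s: "s \<in> {0..P}" for s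
  proof -
    have xs: "\<bar>x s\<bar> < dl" using onO[OF s] by auto
    have d1: "((\<lambda>s. ph (x s)) has_real_derivative phd (x s) * (2 * y s)) (at s within {0..P})"
      by (rule DERIV_chain2[OF DERIV_ph[OF qq_bounds(3)] has_field_derivative_at_within[OF xd]]) (use xs in auto)
    have d2: "(y has_real_derivative - FFd (x s)) (at s within {0..P})"
      by (rule has_field_derivative_at_within[OF yd])
    have d3: "(Th has_real_derivative - om s) (at s within {0..P})" by (rule Thd[OF s])
    define Z1 where "Z1 s = ph (x s)" for s
    have d1': "(Z1 has_real_derivative phd (x s) * (2 * y s)) (at s within {0..P})"
      using d1 unfolding Z1_def[abs_def] .
    have E': "E = (\<lambda>s. (Z1 s - r * cos (Th s)) ^ 2 + (y s - r * sin (Th s)) ^ 2)"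
      unfolding E_def[abs_def] Z1_def ..
    have "(E has_real_derivative
        (2 * (ph (x s) - r * cos (Th s)) * (phd (x s) * (2 * y s) - r * (- sin (Th s) * - om s))
       + 2 * (y s - r * sin (Th s)) * (- FFd (x s) - r * (cos (Th s) * - om s)))) (at s within {0..P})"
      unfolding E'
      apply (rule derivative_eq_intros d1' d2 d3 refl)+
      apply (simp add: Z1_def algebra_simps power2_eq_square)
      done
    moreover have "(2 * (ph (x s) - r * cos (Th s)) * (phd (x s) * (2 * y s) - r * (- sin (Th s) * - om s))
       + 2 * (y s - r * sin (Th s)) * (- FFd (x s) - r * (cos (Th s) * - om s))) = 0"
      unfolding om_def FFd_ph[OF xs] by (simp add: algebra_simps)
    ultimately show ?thesis by simp
  qed
  have "\<exists>c. \<forall>s\<in>{0..P}. E s = c"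
    by (rule has_field_derivative_zero_constant) (use Ed in auto)
  then obtain c where c: "\<And>s. s \<in> {0..P} \<Longrightarrow> E s = c" by blast
  have "E 0 = 0" unfolding E_def Th0 using th0 r0 by (simp add: field_simps)
  then have E0: "E s = 0" if "s \<in> {0..P}" for s using c[OF that] c[of 0] F(1) by auto
  have Zrep: "ph (x s) = r * cos (Th s)" "y s = r * sin (Th s)" if "s \<in> {0..P}" for s
    using E0[OF that] unfolding E_def by (simp_all add: sum_power2_eq_zero_iff)
  have ThP: "Th P = Th 0 - 2 * pi"
  proof -
    have xP: "x P = x 0" "y P = y 0" using F(5) unfolding x_def y_def by auto
    have "cos (Th P) = cos (Th 0)" "sin (Th P) = sin (Th 0)"
      using Zrep[of P] Zrep[of 0] xP F(1) r0 by auto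
    then obtain m :: int where m: "Th P = Th 0 + 2 * pi * m" using sin_cos_eq_iff by metis
    have "P \<le> Th 0 - Th P" using Th_dec[of 0 P] F(1) by auto
    then have "m < 0" using m F(1) by (smt (verit) of_int_nonneg pi_gt_zero mult_nonneg_nonneg)
    moreover have "\<not> m \<le> -2"
    proof
      assume m2: "m \<le> -2"
      have "Th P \<le> Th 0 - 2 * pi"
      proof -
        have "2 * pi * m \<le> 2 * pi * (-2)" using m2 by (intro mult_left_mono) auto
        then show ?thesis using m pi_gt_zero by linarith
      qed
      then obtain s1 where s1: "0 \<le> s1" "s1 \<le> P" "Th s1 = Th 0 - 2 * pi"
        using IVT2'[of Th P "Th 0 - 2 * pi" 0] Thc F(1) by auto
      have "Th P < Th 0 - 2 * pi"
      proof -
        have "2 * pi * m \<le> 2 * pi * (-2)" using m2 by (intro mult_left_mono) auto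
        then show ?thesis using m pi_gt_zero by linarith
      qed
      then have "s1 \<noteq> P" using s1 by auto
      moreover have "s1 \<noteq> 0" using s1 pi_gt_zero by auto
      moreover have "g s1 = g 0"
      proof -
        have "ph (x s1) = ph (x 0)" "y s1 = y 0" using Zrep[of s1] Zrep[of 0] s1 F(1) by (auto simp: cos_diff sin_diff)
        then have "x s1 = x 0" using ph_inj[of "x s1" "x 0"] onO[of s1] onO[of 0] s1 F(1) by auto
        then show ?thesis using \<open>y s1 = y 0\<close> unfolding x_def y_def by (simp add: prod_eq_iff)
      qed
      ultimately show False using F(6) s1 F(1) unfolding inj_on_def by auto
    qed
    ultimately have "m = -1" by linarith
    then show ?thesis using m by simp
  qed
  have xrep: "x s = ps (r * cos (Th s))" if "s \<in> {0..P}" for s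
    using ps_ph[of "x s"] onO[OF that] Zrep[OF that] by auto
  obtain K where Kd: "\<And>x. (K has_real_derivative hk k r x) (at x)"
    and KV: "\<And>u. K u - K (u - 2 * pi) = Vk k r"
    using Vk_antideriv[of r k] r0 rdl by auto
  have "((\<lambda>s. hk k r (Th s) * om s) has_integral (- K (Th P)) - (- K (Th 0))) {0..P}"
  proof (rule fundamental_theorem_of_calculus)
    show "0 \<le> P" using F(1) by simp
    fix s assume s: "s \<in> {0..P}"
    have "((\<lambda>s. - K (Th s)) has_real_derivative - (hk k r (Th s) * - om s)) (at s within {0..P})"
      by (intro derivative_intros DERIV_chain2[OF Kd Thd[OF s]])
    then show "((\<lambda>s. - K (Th s)) has_vector_derivative hk k r (Th s) * om s) (at s within {0..P})"
      by (simp add: has_real_derivative_iff_has_vector_derivative)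
  qed
  then have I1: "integral {0..P} (\<lambda>s. hk k r (Th s) * om s) = Vk k r"
    using KV[of "Th 0"] ThP by (simp add: integral_unique)
  have pt: "2 * x s ^ k = hk k r (Th s) * om s" if s: "s \<in> {0..P}" for s
  proof -
    have "phd (x s) > 0" using phd_bounds[of "x s"] onO[OF s] by auto
    then show ?thesis unfolding hk_def om_def psd_def xrep[OF s, symmetric] by simp
  qed
  have "integral {0..P} (\<lambda>s. 2 * fst (g s) ^ k) = integral {0..P} (\<lambda>s. hk k r (Th s) * om s)"
    by (rule integral_cong) (use pt in \<open>simp add: x_def\<close>)
  then have I2: "integral {0..P} (\<lambda>s. 2 * fst (g s) ^ k) = Vk k r" using I1 by simp
  then show "integral {0..P} (\<lambda>s. 2 * fst (g s) ^ k) = Vk k (sqrt t)" unfolding r_def .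
  define N where "N = Th -` {\<theta>. \<theta> \<in> {Th 0 - 2 * pi..Th 0} \<and> sin \<theta> = 0} \<inter> {0..P}"
  have Nfin: "finite N" unfolding N_def by (intro finite_vimage_IntI finite_sin_zeros Th_inj)
  have "integral {0..P} (\<lambda>s. fst (g s) ^ k / snd (g s) * fst (vector_derivative g (at s)))
      = integral {0..P} (\<lambda>s. 2 * fst (g s) ^ k)"
  proof (rule integral_spike[OF negligible_finite[OF Nfin]])
    fix s assume s: "s \<in> {0..P} - N"
    have "Th P \<le> Th s" "Th s \<le> Th 0" using Th_dec[of s P] Th_dec[of 0 s] s by auto
    then have "sin (Th s) \<noteq> 0" using s ThP unfolding N_def by auto
    then have "y s \<noteq> 0" using Zrep[of s] s r0 by auto
    then show "2 * fst (g s) ^ k = fst (g s) ^ k / snd (g s) * fst (vector_derivative g (at s))"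
      using F(7)[of s] unfolding y_def by simp
  qed
  then show "integral {0..P} (\<lambda>s. fst (g s) ^ k / snd (g s) * fst (vector_derivative g (at s))) = Vk k (sqrt t)"
    using I2 unfolding r_def by simp
qed

end

context osc begin

lemma existence:
  assumes t: "0 < t" "t < t0"
  shows "\<exists>g P. oval_param HH t g P"
proof -
  define r where "r = sqrt t"
  have r0: "0 < r" unfolding r_def using t by simp
  have rt: "r ^ 2 = t" unfolding r_def using t by simp
  have rdl: "r < dl / 4"
  proof -
    have "r < sqrt t0" unfolding r_def using t by simp
    then show ?thesis unfolding t0_def using dl_pos by simp
  qed
  have rc: "\<bar>r * cos v\<bar> \<le> r" "\<bar>r * cos v\<bar> < dl / 2" for v
  proof -
    have "r * \<bar>cos v\<bar> \<le> r * 1" using r0 abs_cos_le_one[of v] by (intro mult_left_mono) auto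
    then show "\<bar>r * cos v\<bar> \<le> r" using r0 by (simp add: abs_mult)
    then show "\<bar>r * cos v\<bar> < dl / 2" using rdl by simp
  qed
  define gf where "gf v = psd (r * cos v) / 2" for v
  have gfc: "isCont gf v" for v
  proof -
    have rc': "isCont (\<lambda>v. r * cos v) v" by (intro continuous_intros)
    show ?thesis unfolding gf_def[abs_def] using isCont_o2[OF rc' isCont_psd[OF rc(2)]] by (intro continuous_intros) auto
  qed
  have gfb: "1/4 \<le> gf v" "gf v \<le> 1" for v using psd_bounds[of "r * cos v"] rc(2)[of v] unfolding gf_def by auto
  have gfp: "gf (v - 2 * pi) = gf v" for v unfolding gf_def by (simp add: cos_diff)
  obtain K where Kd: "\<And>v. (K has_real_derivative gf v) (at v)"
    and KI: "\<And>a b. a \<le> b \<Longrightarrow> integral {a..b} gf = K b - K a"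
    using global_antideriv[of gf] gfc by blast
  define G where "G v = K v - K 0" for v
  have Gd: "(G has_real_derivative gf v) (at v)" for v
    unfolding G_def[abs_def] using Kd[of v] by (auto intro!: derivative_eq_intros)
  have GI: "integral {a..b} gf = G b - G a" if "a \<le> b" for a b using KI[OF that] unfolding G_def by simp
  have G0: "G 0 = 0" unfolding G_def by simp
  define P where "P = G (2 * pi)"
  have Gper: "G v - G (v - 2 * pi) = P" for v
  proof -
    have "K v - K (v - 2 * pi) = integral {0..2*pi} gf" by (rule antideriv_periodic[OF Kd KI gfp])
    moreover have "integral {0..2*pi} gf = P" using GI[of 0 "2*pi"] G0 unfolding P_def by simp
    ultimately show ?thesis unfolding G_def by simp
  qed
  have Gmono: "G a < G b" if "a < b" for a b
  proof (rule DERIV_pos_imp_increasing[OF that])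
    fix v show "\<exists>y. (G has_real_derivative y) (at v) \<and> 0 < y" using Gd[of v] gfb[of v] by auto
  qed
  have Ginj: "inj G"
  proof (rule injI)
    fix a b assume "G a = G b"
    then show "a = b" using Gmono[of a b] Gmono[of b a] by (cases a b rule: linorder_cases) auto
  qed
  have Glow: "v / 4 \<le> G v" if "0 \<le> v" for v
  proof -
    have "integral {0..v} (\<lambda>_. 1/4::real) \<le> integral {0..v} gf"
      using gfb gfc by (intro integral_le integrable_continuous_real continuous_at_imp_continuous_on) auto
    then show ?thesis using GI[OF that] G0 that by simp
  qed
  have Ghigh: "G v \<le> v / 4" if "v \<le> 0" for v
  proof -
    have "integral {v..0} (\<lambda>_. 1/4::real) \<le> integral {v..0} gf"
      using gfb gfc by (intro integral_le integrable_continuous_real continuous_at_imp_continuous_on) auto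
    then show ?thesis using GI[OF that] G0 that by simp
  qed
  have Gsurj: "\<exists>v. G v = s" for s
  proof -
    have "\<exists>v\<ge>-4 * \<bar>s\<bar>. v \<le> 4 * \<bar>s\<bar> \<and> G v = s"
    proof (rule IVT)
      show "G (- 4 * \<bar>s\<bar>) \<le> s" using Ghigh[of "-4 * \<bar>s\<bar>"] by auto
      show "s \<le> G (4 * \<bar>s\<bar>)" using Glow[of "4 * \<bar>s\<bar>"] by auto
      show "- 4 * \<bar>s\<bar> \<le> 4 * \<bar>s\<bar>" by simp
      show "\<forall>v. - 4 * \<bar>s\<bar> \<le> v \<and> v \<le> 4 * \<bar>s\<bar> \<longrightarrow> isCont G v" using Gd DERIV_isCont by blast
    qed
    then show ?thesis by blast
  qed
  define u where "u s = (THE v. G v = s)" for s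
  have Gu: "G (u s) = s" for s
  proof -
    obtain v where v: "G v = s" using Gsurj by blast
    have "u s = v" unfolding u_def
    proof (rule the_equality)
      show "G v = s" by (rule v)
      fix w assume "G w = s" then show "w = v" using v Ginj by (metis injD)
    qed
    then show ?thesis using v by simp
  qed
  have uG: "u (G v) = v" for v using Gu[of "G v"] Ginj by (simp add: inj_eq)
  have Gc: "isCont G v" for v using Gd[of v] DERIV_isCont by blast
  have Gc: "isCont G v" for v using Gd[of v] DERIV_isCont by blast
  have ud: "(u has_real_derivative 2 / psd (r * cos (u s))) (at s)" for s
  proof -
    have cu: "isCont u (G (u s))"
      by (rule isCont_inverse_function[where d=1 and f=G and g=u]) (use uG Gc in auto)
    have "(u has_real_derivative inverse (gf (u s))) (at s)"
    proof (rule DERIV_inverse_function[where f=G and a="s - 1" and b="s + 1"])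
      show "(G has_real_derivative gf (u s)) (at (u s))" by (rule Gd)
      show "gf (u s) \<noteq> 0" using gfb[of "u s"] by auto
      show "isCont u s" using cu Gu by simp
    qed (use Gu in auto)
    then show ?thesis unfolding gf_def by (simp add: inverse_eq_divide)
  qed
  define g where "g s = (ps (r * cos (u s)), - (r * sin (u s)))" for s
  have gd: "(g has_vector_derivative ham_field HH (g s)) (at s)" for s
  proof -
    define X where "X = r * cos (u s)"
    have X: "\<bar>X\<bar> < dl / 2" unfolding X_def by (rule rc(2))
    have psdX: "psd X \<noteq> 0" using psd_bounds[of X] X by auto
    have uc: "((\<lambda>s. cos (u s)) has_real_derivative - sin (u s) * (2 / psd X)) (at s)"
      unfolding X_def by (rule DERIV_chain2[OF DERIV_cos ud])
    have us: "((\<lambda>s. sin (u s)) has_real_derivative cos (u s) * (2 / psd X)) (at s)"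
      unfolding X_def by (rule DERIV_chain2[OF DERIV_sin ud])
    have inner: "((\<lambda>s. r * cos (u s)) has_real_derivative r * (- sin (u s) * (2 / psd X))) (at s)"
      by (rule DERIV_cmult[OF uc])
    have d1: "((\<lambda>s. ps (r * cos (u s))) has_real_derivative psd X * (r * (- sin (u s) * (2 / psd X)))) (at s)"
      using DERIV_chain2[where f=ps and g="\<lambda>s. r * cos (u s)", OF DERIV_ps[OF X, unfolded X_def] inner]
      unfolding X_def by simp
    have d2: "((\<lambda>s. - (r * sin (u s))) has_real_derivative - (r * (cos (u s) * (2 / psd X)))) (at s)"
      by (rule DERIV_minus[OF DERIV_cmult[OF us]])
    have e1: "psd X * (r * (- sin (u s) * (2 / psd X))) = 2 * (- (r * sin (u s)))" using psdX by simp
    have psX: "\<bar>ps X\<bar> < dl" using ps_abs(3)[of X] X by auto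
    have FX: "FFd (ps X) = 2 * X * phd (ps X)" using FFd_ph[OF psX] ps_props(2)[of X] X by simp
    have e2: "- (r * (cos (u s) * (2 / psd X))) = - FFd (ps X)"
    proof -
      have "r * (cos (u s) * (2 / psd X)) = 2 * X * phd (ps X)" unfolding psd_def X_def by simp
      then show ?thesis using FX by simp
    qed
    have v1: "((\<lambda>s. ps (r * cos (u s))) has_vector_derivative 2 * (- (r * sin (u s)))) (at s)"
      using d1 unfolding e1 has_real_derivative_iff_has_vector_derivative .
    have v2: "((\<lambda>s. - (r * sin (u s))) has_vector_derivative - FFd (ps X)) (at s)"
      using d2 unfolding e2 has_real_derivative_iff_has_vector_derivative .
    have "(g has_vector_derivative (2 * (- (r * sin (u s))), - FFd (ps X))) (at s)"
      unfolding g_def by (rule has_vector_derivative_Pair[OF v1 v2])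
    moreover have "ham_field HH (g s) = (2 * (- (r * sin (u s))), - FFd (ps X))"
      unfolding ham_HH g_def X_def by simp
    ultimately show ?thesis by simp
  qed
  have u0: "u 0 = 0" using uG[of 0] G0 by simp
  have uP: "u P = 2 * pi" using uG[of "2 * pi"] unfolding P_def by simp
  have Ppos: "0 < P" using Gmono[of 0 "2*pi"] G0 unfolding P_def by simp
  have urange: "0 \<le> u s \<and> u s < 2 * pi" if "s \<in> {0..<P}" for s
  proof -
    have "\<not> u s < 0"
    proof
      assume "u s < 0" then have "G (u s) < G 0" by (rule Gmono)
      then show False using Gu[of s] G0 that by simp
    qed
    moreover have "\<not> 2 * pi \<le> u s"
    proof
      assume a: "2 * pi \<le> u s"
      have "G (2 * pi) \<le> G (u s)"
      proof (cases "2 * pi = u s")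
        case False then show ?thesis using Gmono[of "2*pi" "u s"] a by simp
      qed simp
      then show False using Gu[of s] that unfolding P_def by simp
    qed
    ultimately show ?thesis by simp
  qed
  have phps: "ph (ps (r * cos v)) = r * cos v" for v
    using ps_props(2)[of "r * cos v"] rc(2)[of v] by simp
  have ginj: "inj_on g {0..<P}"
  proof (rule inj_onI)
    fix s1 s2 assume s: "s1 \<in> {0..<P}" "s2 \<in> {0..<P}" "g s1 = g s2"
    have e: "ps (r * cos (u s1)) = ps (r * cos (u s2))" "r * sin (u s1) = r * sin (u s2)"
      using s(3) unfolding g_def by auto
    have "r * cos (u s1) = r * cos (u s2)" using phps[of "u s1"] phps[of "u s2"] e(1) by metis
    then have "cos (u s1) = cos (u s2)" "sin (u s1) = sin (u s2)" using r0 e(2) by auto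
    then obtain m :: int where m: "u s1 = u s2 + 2 * pi * m" using sin_cos_eq_iff by metis
    have "m = 0"
    proof -
      have "\<bar>2 * pi * m\<bar> < 2 * pi * 1" using urange[OF s(1)] urange[OF s(2)] m by auto
      then have "\<bar>real_of_int m\<bar> < 1" by (simp add: abs_mult)
      then show ?thesis by linarith
    qed
    then have "u s1 = u s2" using m by simp
    then have "G (u s1) = G (u s2)" by simp
    then show "s1 = s2" by (simp add: Gu)
  qed
  have gimg: "g ` {0..<P} = Oval t"
  proof
    show "g ` {0..<P} \<subseteq> Oval t"
    proof
      fix p assume "p \<in> g ` {0..<P}"
      then obtain s where p: "p = g s" by auto
      define X where "X = r * cos (u s)"
      have X: "\<bar>X\<bar> < dl / 2" unfolding X_def by (rule rc(2))
      have "\<bar>ps X\<bar> < dl" using ps_abs(3)[of X] X by auto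
      moreover have "(- (r * sin (u s))) ^ 2 + FF (ps X) = t"
      proof -
        have "FF (ps X) = X ^ 2" using FF_ph[of "ps X"] ps_props[of X] X by auto
        moreover have "(- (r * sin (u s))) ^ 2 + X ^ 2 = r ^ 2"
          unfolding X_def by (simp add: power_mult_distrib) (simp add: distrib_left[symmetric])
        ultimately show ?thesis using rt by simp
      qed
      ultimately show "p \<in> Oval t" unfolding p g_def Oval_def X_def by simp
    qed
    show "Oval t \<subseteq> g ` {0..<P}"
    proof
      fix p assume "p \<in> Oval t"
      then obtain x y where p: "p = (x, y)" "\<bar>x\<bar> < dl" "y ^ 2 + FF x = t" unfolding Oval_def by auto
      have "(ph x / r) ^ 2 + (- y / r) ^ 2 = (y ^ 2 + ph x ^ 2) / r ^ 2"
        by (simp add: power_divide add_divide_distrib)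
      also have "\<dots> = 1" using p FF_ph[of x] rt t by simp
      finally obtain v where v: "0 \<le> v" "v < 2 * pi" "ph x / r = cos v" "- y / r = sin v"
        using sincos_total_2pi by metis
      have "G 0 \<le> G v"
      proof (cases "v = 0")
        case False then show ?thesis using Gmono[of 0 v] v by simp
      qed simp
      moreover have "G v < P" using Gmono[of v "2*pi"] v unfolding P_def by simp
      ultimately have s: "G v \<in> {0..<P}" using G0 by simp
      have c: "r * cos v = ph x" "r * sin v = - y" using v r0 by (simp_all add: field_simps)
      have "g (G v) = (ps (ph x), y)" unfolding g_def uG c by simp
      also have "\<dots> = p" using ps_ph[of x] p by simp
      finally have "p = g (G v)" by simp
      then show "p \<in> g ` {0..<P}" using s by blast
    qed
  qed
  have gP: "g P = g 0" unfolding g_def u0 uP by simp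
  have "oval_param HH t g P"
    unfolding oval_param_def central_oval_eq[OF t] using Ppos gd gP gimg ginj by blast
  then show ?thesis by blast
qed

lemma oval_integral_eq: assumes t: "0 < t" "t < t0" shows "oval_integral HH k t = Vk k (sqrt t)"
proof -
  obtain g P where op: "oval_param HH t g P" using existence[OF t] by blast
  show ?thesis unfolding oval_integral_def
  proof (rule the_equality)
    show "\<exists>g P. oval_param HH t g P \<and> Vk k (sqrt t) = integral {0..P} (\<lambda>s. fst (g s) ^ k / snd (g s) * fst (vector_derivative g (at s)))"
      by (intro exI conjI) (rule op, rule valid_integral(2)[OF t op, symmetric])
    fix v assume "\<exists>g P. oval_param HH t g P \<and> v = integral {0..P} (\<lambda>s. fst (g s) ^ k / snd (g s) * fst (vector_derivative g (at s)))"
    then obtain g' P' where g': "oval_param HH t g' P'"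
      "v = integral {0..P'} (\<lambda>s. fst (g' s) ^ k / snd (g' s) * fst (vector_derivative g' (at s)))" by blast
    then show "v = Vk k (sqrt t)" using valid_integral(2)[OF t g'(1)] by simp
  qed
qed

end

context osc begin

lemma recursion:
  assumes t: "0 < t" "t < t0"
  shows "real j * t * Vk (j - 1) (sqrt t) - real (j + 1) * Vk (j + 1) (sqrt t)
     - (\<Sum>i=1..n-2. (real j + (real i + 2) / 2) * a i * Vk (j + i + 1) (sqrt t)) = 0"
proof -
  obtain g P where op: "oval_param HH t g P" using existence[OF t] by blast
  note F = flow_facts[OF t op]
  define x where "x s = fst (g s)" for s
  define y where "y s = snd (g s)" for s
  have xd: "(x has_real_derivative 2 * y s) (at s)" for s unfolding x_def y_def using F(2) .
  have yd: "(y has_real_derivative - FFd (x s)) (at s)" for s unfolding x_def y_def using F(3) .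
  have xc: "continuous_on {0..P} x" using xd DERIV_isCont continuous_at_imp_continuous_on by blast
  have I: "integral {0..P} (\<lambda>s. 2 * x s ^ m) = Vk m (sqrt t)" for m
    unfolding x_def by (rule valid_integral(1)[OF t op])
  have intg: "(\<lambda>s. 2 * x s ^ m) integrable_on {0..P}" for m
    by (intro integrable_continuous_real continuous_intros xc)
  define c where "c i = (real j + (real i + 2) / 2) * a i" for i
  define D where "D s = real j * x s ^ (j - 1) * (2 * y s) * y s + x s ^ j * (- FFd (x s))" for s
  have "(D has_integral (x P ^ j * y P - x 0 ^ j * y 0)) {0..P}"
  proof (rule fundamental_theorem_of_calculus)
    show "0 \<le> P" using F(1) by simp
    fix s assume "s \<in> {0..P}"
    have "((\<lambda>s. x s ^ j * y s) has_real_derivative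
        (of_nat j * (2 * y s * x s ^ (j - Suc 0))) * y s + - FFd (x s) * x s ^ j) (at s within {0..P})"
      by (intro DERIV_mult DERIV_power has_field_derivative_at_within[OF xd] has_field_derivative_at_within[OF yd])
    then show "((\<lambda>s. x s ^ j * y s) has_vector_derivative D s) (at s within {0..P})"
      unfolding D_def has_real_derivative_iff_has_vector_derivative[symmetric] by (simp add: algebra_simps)
  qed
  moreover have "x P = x 0" "y P = y 0" using F(5) unfolding x_def y_def by auto
  ultimately have D0: "integral {0..P} D = 0" by (simp add: integral_unique)
  have Dform: "D s = real j * t * (2 * x s ^ (j - 1)) - real (j + 1) * (2 * x s ^ (j + 1))
      - (\<Sum>i=1..n-2. c i * (2 * x s ^ (j + i + 1)))" if s: "s \<in> {0..P}" for s
  proof -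
    have on: "\<bar>x s\<bar> < dl" "y s ^ 2 + FF (x s) = t" using F(4)[OF s] unfolding x_def y_def by auto
    have pw: "real j * x s ^ (j - 1) * x s ^ (m + 2) = real j * x s ^ (j + m + 1)" for m
      by (cases j) (auto simp: power_add[symmetric] algebra_simps)
    have yy: "y s * y s = t - FF (x s)" using on(2) by (simp add: power2_eq_square)
    have "D s = 2 * real j * x s ^ (j - 1) * (y s * y s) - x s ^ j * FFd (x s)"
      unfolding D_def by (simp add: algebra_simps)
    also have "\<dots> = 2 * real j * x s ^ (j - 1) * (t - FF (x s)) - x s ^ j * FFd (x s)"
      unfolding yy ..
    also have "real j * x s ^ (j - 1) * FF (x s) = real j * x s ^ (j + 1) + (\<Sum>i=1..n-2. real j * a i * x s ^ (j + i + 1))"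
    proof -
      have "real j * x s ^ (j - 1) * FF (x s) = real j * x s ^ (j - 1) * x s ^ (0 + 2)
          + (\<Sum>i=1..n-2. a i * (real j * x s ^ (j - 1) * x s ^ (i + 2)))"
        unfolding FF_def by (simp add: algebra_simps sum_distrib_left power2_eq_square)
      also have "\<dots> = real j * x s ^ (j + 1) + (\<Sum>i=1..n-2. real j * a i * x s ^ (j + i + 1))"
        unfolding pw by (simp add: algebra_simps)
      finally show ?thesis .
    qed
    moreover have "x s ^ j * FFd (x s) = 2 * x s ^ (j + 1) + (\<Sum>i=1..n-2. real (i + 2) * a i * x s ^ (j + i + 1))"
      unfolding FFd_def by (simp add: algebra_simps sum_distrib_left power_add)
    ultimately have "D s = real j * t * (2 * x s ^ (j - 1)) - 2 * real j * x s ^ (j + 1)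
        - 2 * (\<Sum>i=1..n-2. real j * a i * x s ^ (j + i + 1))
        - 2 * x s ^ (j + 1) - (\<Sum>i=1..n-2. real (i + 2) * a i * x s ^ (j + i + 1))"
      by (simp add: algebra_simps)
    also have "\<dots> = real j * t * (2 * x s ^ (j - 1)) - real (j + 1) * (2 * x s ^ (j + 1))
      - (\<Sum>i=1..n-2. c i * (2 * x s ^ (j + i + 1)))"
      unfolding c_def by (simp add: algebra_simps sum_distrib_left sum.distrib[symmetric] add_divide_distrib)
    finally show ?thesis .
  qed
  have "integral {0..P} D = integral {0..P} (\<lambda>s. real j * t * (2 * x s ^ (j - 1)) - real (j + 1) * (2 * x s ^ (j + 1))
      - (\<Sum>i=1..n-2. c i * (2 * x s ^ (j + i + 1))))"
    by (rule integral_cong) (rule Dform)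
  also have "\<dots> = real j * t * Vk (j - 1) (sqrt t) - real (j + 1) * Vk (j + 1) (sqrt t)
      - (\<Sum>i=1..n-2. c i * Vk (j + i + 1) (sqrt t))"
  proof -
    have i1: "(\<lambda>s. real j * t * (2 * x s ^ (j - 1))) integrable_on {0..P}" by (intro integrable_on_mult_right intg)
    have i2: "(\<lambda>s. real (j + 1) * (2 * x s ^ (j + 1))) integrable_on {0..P}" by (intro integrable_on_mult_right intg)
    have i3: "(\<lambda>s. \<Sum>i=1..n-2. c i * (2 * x s ^ (j + i + 1))) integrable_on {0..P}"
      by (intro integrable_sum integrable_on_mult_right intg) auto
    have "integral {0..P} (\<lambda>s. \<Sum>i=1..n-2. c i * (2 * x s ^ (j + i + 1))) = (\<Sum>i=1..n-2. c i * Vk (j + i + 1) (sqrt t))"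
    proof -
      have "integral {0..P} (\<lambda>s. \<Sum>i=1..n-2. c i * (2 * x s ^ (j + i + 1)))
          = (\<Sum>i=1..n-2. integral {0..P} (\<lambda>s. c i * (2 * x s ^ (j + i + 1))))"
        by (rule integral_sum[OF finite_atLeastAtMost]) (rule integrable_on_mult_right[OF intg])
      also have "\<dots> = (\<Sum>i=1..n-2. c i * Vk (j + i + 1) (sqrt t))"
      proof (intro sum.cong refl)
        fix i
        have "integral {0..P} (\<lambda>s. c i * (2 * x s ^ (j + i + 1))) = c i * integral {0..P} (\<lambda>s. 2 * x s ^ (j + i + 1))"
          by (rule integral_mult_right)
        then show "integral {0..P} (\<lambda>s. c i * (2 * x s ^ (j + i + 1))) = c i * Vk (j + i + 1) (sqrt t)"
          by (simp only: I)
      qed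
      finally show ?thesis .
    qed
    moreover have "integral {0..P} (\<lambda>s. real j * t * (2 * x s ^ (j - 1))) = real j * t * Vk (j - 1) (sqrt t)"
      by (subst integral_mult_right) (simp only: I)
    moreover have "integral {0..P} (\<lambda>s. real (j + 1) * (2 * x s ^ (j + 1))) = real (j + 1) * Vk (j + 1) (sqrt t)"
      by (subst integral_mult_right) (simp only: I)
    moreover have "integral {0..P} (\<lambda>s. real j * t * (2 * x s ^ (j - 1)) - real (j + 1) * (2 * x s ^ (j + 1))
      - (\<Sum>i=1..n-2. c i * (2 * x s ^ (j + i + 1)))) =
      integral {0..P} (\<lambda>s. real j * t * (2 * x s ^ (j - 1))) - integral {0..P} (\<lambda>s. real (j + 1) * (2 * x s ^ (j + 1)))
      - integral {0..P} (\<lambda>s. \<Sum>i=1..n-2. c i * (2 * x s ^ (j + i + 1)))"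
      by (simp only: integral_diff[OF integrable_diff[OF i1 i2] i3] integral_diff[OF i1 i2])
    ultimately show ?thesis by simp
  qed
  finally show ?thesis using D0 unfolding c_def by simp
qed

end


lemma int_bound:
  fixes f :: "real \<Rightarrow> real"
  assumes "\<And>x. isCont f x" "\<And>x. x \<in> {a..b} \<Longrightarrow> \<bar>f x\<bar> \<le> B" "a \<le> b"
  shows "\<bar>integral {a..b} f\<bar> \<le> (b - a) * B"
proof -
  have i: "f integrable_on {a..b}" using assms(1) by (intro integrable_continuous_real continuous_at_imp_continuous_on) auto
  have "integral {a..b} (\<lambda>_. -B) \<le> integral {a..b} f"
  proof (intro integral_le i)
    fix x assume "x \<in> {a..b}" then show "- B \<le> f x" using assms(2)[of x] by linarith
  qed (rule integrable_const_ivl)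
  moreover have "integral {a..b} f \<le> integral {a..b} (\<lambda>_. B)" using assms(2) by (intro integral_le i) (auto simp: abs_le_iff)
  ultimately show ?thesis using assms(3) by (simp add: abs_le_iff)
qed

lemma integral_cos_0_2pi: "integral {0..2*pi} cos = 0"
proof -
  have "(cos has_integral sin (2*pi) - sin 0) {0..2*pi}"
  proof (rule fundamental_theorem_of_calculus)
    fix x :: real assume "x \<in> {0..2*pi}"
    show "(sin has_vector_derivative cos x) (at x within {0..2*pi})"
      using DERIV_sin[of x] by (simp add: has_real_derivative_iff_has_vector_derivative[symmetric] has_field_derivative_at_within)
  qed simp
  then show ?thesis by (simp add: integral_unique)
qed

context osc begin

lemma crude: assumes "0 \<le> r" "r < dl / 2" shows "\<bar>Vk m r\<bar> \<le> 4 * pi * (2 * r) ^ m"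
proof -
  have "\<bar>Vk m r\<bar> \<le> (2 * pi - 0) * ((2 * r) ^ m * 2)" unfolding Vk_def
  proof (rule int_bound)
    show "isCont (hk m r) x" for x by (rule isCont_hk[OF assms])
    fix v :: real
    have X: "\<bar>r * cos v\<bar> \<le> r"
    proof -
      have "r * \<bar>cos v\<bar> \<le> r * 1" using assms abs_cos_le_one[of v] by (intro mult_left_mono) auto
      then show ?thesis using assms by (simp add: abs_mult)
    qed
    then have X2: "\<bar>r * cos v\<bar> \<le> dl / 2" using assms by simp
    have "\<bar>ps (r * cos v)\<bar> \<le> 2 * r" using ps_abs(2)[OF X2] X by simp
    then have "\<bar>ps (r * cos v)\<bar> ^ m \<le> (2 * r) ^ m" by (intro power_mono) auto
    moreover have "\<bar>psd (r * cos v)\<bar> \<le> 2" using psd_bounds[OF X2] by simp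
    ultimately show "\<bar>hk m r v\<bar> \<le> (2 * r) ^ m * 2" unfolding hk_def abs_mult power_abs
      by (intro mult_mono) (auto simp: assms)
  qed simp
  then show ?thesis by (simp add: algebra_simps)
qed

lemma base: assumes "0 \<le> r" "r < dl / 2" shows "\<bar>Vk 0 r - 2 * pi\<bar> \<le> 2 * pi * C3 * r ^ 2"
proof -
  have ih: "(hk 0 r) integrable_on {0..2*pi}"
    using isCont_hk[OF assms] by (intro integrable_continuous_real continuous_at_imp_continuous_on) auto
  have ic: "(\<lambda>v. 1 - a 1 * r * cos v) integrable_on {0..2*pi}"
    by (intro integrable_continuous_real continuous_intros)
  have "integral {0..2*pi} (\<lambda>v. 1 - a 1 * r * cos v) = 2 * pi"
  proof -
    have "integral {0..2*pi} (\<lambda>v. a 1 * r * cos v) = a 1 * r * integral {0..2*pi} cos"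
      by (rule integral_mult_right)
    then have "integral {0..2*pi} (\<lambda>v. a 1 * r * cos v) = 0" using integral_cos_0_2pi by simp
    moreover have "integral {0..2*pi} (\<lambda>v. 1 - a 1 * r * cos v) = integral {0..2*pi} (\<lambda>v. 1) - integral {0..2*pi} (\<lambda>v. a 1 * r * cos v)"
      by (rule integral_diff) (auto intro!: integrable_continuous_real continuous_intros)
    ultimately show ?thesis by simp
  qed
  then have "Vk 0 r - 2 * pi = integral {0..2*pi} (\<lambda>v. hk 0 r v - (1 - a 1 * r * cos v))"
    unfolding Vk_def using integral_diff[OF ih ic] by simp
  also have "\<bar>\<dots>\<bar> \<le> (2 * pi - 0) * (C3 * r ^ 2)"
  proof (rule int_bound)
    show "isCont (\<lambda>v. hk 0 r v - (1 - a 1 * r * cos v)) x" for x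
      using isCont_hk[OF assms] by (intro continuous_intros) auto
    fix v :: real
    have X: "\<bar>r * cos v\<bar> \<le> r"
    proof -
      have "r * \<bar>cos v\<bar> \<le> r * 1" using assms abs_cos_le_one[of v] by (intro mult_left_mono) auto
      then show ?thesis using assms by (simp add: abs_mult)
    qed
    then have X2: "\<bar>r * cos v\<bar> \<le> dl / 2" using assms by simp
    have "\<bar>psd (r * cos v) - 1 + a 1 * (r * cos v)\<bar> \<le> C3 * (r * cos v) ^ 2" by (rule psd_approx[OF X2])
    also have "\<dots> \<le> C3 * r ^ 2"
    proof -
      have "(r * cos v) ^ 2 \<le> r ^ 2" using X by (metis abs_le_square_iff abs_of_nonneg assms(1))
      moreover have "0 \<le> C3" unfolding C3_def using C1_nonneg M1_nonneg by simp
      ultimately show ?thesis by (intro mult_left_mono) auto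
    qed
    finally show "\<bar>hk 0 r v - (1 - a 1 * r * cos v)\<bar> \<le> C3 * r ^ 2" unfolding hk_def by (simp add: algebra_simps)
  qed simp
  finally show ?thesis by (simp add: algebra_simps)
qed

lemma sym_zero: assumes oz: oddzero and r: "0 \<le> r" "r < dl / 2" shows "Vk (2 * k + 1) r = 0"
proof -
  obtain K where Kd: "\<And>x. (K has_real_derivative hk (2 * k + 1) r x) (at x)"
    and KV: "\<And>u. K u - K (u - 2 * pi) = Vk (2 * k + 1) r"
    using Vk_antideriv[OF r] by blast
  have X2: "\<bar>r * cos v\<bar> \<le> dl / 2" for v
  proof -
    have "r * \<bar>cos v\<bar> \<le> r * 1" using r abs_cos_le_one[of v] by (intro mult_left_mono) auto
    then show ?thesis using r by (simp add: abs_mult)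
  qed
  have hodd: "hk (2 * k + 1) r (pi - v) = - hk (2 * k + 1) r v" for v
  proof -
    have "r * cos (pi - v) = - (r * cos v)" by simp
    then show ?thesis unfolding hk_def using ps_odd[OF oz X2[of v]] psd_even[OF oz X2[of v]] by simp
  qed
  have "\<exists>c. \<forall>x\<in>UNIV. K x - K (pi - x) = c"
  proof (rule has_field_derivative_zero_constant)
    fix x :: real
    have "((\<lambda>x. K x - K (pi - x)) has_real_derivative hk (2 * k + 1) r x - hk (2 * k + 1) r (pi - x) * (0 - 1)) (at x)"
      by (intro derivative_intros Kd DERIV_chain2[OF Kd])
    then show "((\<lambda>x. K x - K (pi - x)) has_real_derivative 0) (at x within UNIV)" using hodd by simp
  qed auto
  then obtain c where c: "\<And>x. K x - K (pi - x) = c" by blast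
  have "Vk (2 * k + 1) r = K 0 - K (0 - 2 * pi)" using KV[of 0] by simp
  also have "\<dots> = K pi - K (pi + 2 * pi)" using c[of 0] c[of "-2*pi"] by (simp add: algebra_simps)
  also have "\<dots> = - (K (3 * pi) - K (3 * pi - 2 * pi))" by (simp add: algebra_simps)
  also have "\<dots> = - Vk (2 * k + 1) r" using KV[of "3 * pi"] by simp
  finally show ?thesis by simp
qed

end

context osc begin

definition W :: "nat \<Rightarrow> real \<Rightarrow> real" where "W m t = Vk m (sqrt t)"
definition Ob :: "(real \<Rightarrow> real) \<Rightarrow> nat \<Rightarrow> bool" where
  "Ob f N \<longleftrightarrow> (\<exists>C. \<forall>t. 0 < t \<and> t < t0 \<longrightarrow> \<bar>f t\<bar> \<le> C * t ^ N)"

lemma t0_le1: "t0 \<le> 1" unfolding t0_def using dl_le1 dl_pos by (simp add: power_le_one)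

lemma ObI: "(\<And>t. 0 < t \<Longrightarrow> t < t0 \<Longrightarrow> \<bar>f t\<bar> \<le> C * t ^ N) \<Longrightarrow> Ob f N"
  unfolding Ob_def by blast

lemma Ob_cong: "Ob f N \<Longrightarrow> (\<And>t. 0 < t \<Longrightarrow> t < t0 \<Longrightarrow> f t = g t) \<Longrightarrow> Ob g N"
  unfolding Ob_def by (metis)

lemma Ob_zero: "Ob (\<lambda>t. 0) N" by (rule ObI[where C=0]) simp

lemma Ob_add: assumes "Ob f N" "Ob g N" shows "Ob (\<lambda>t. f t + g t) N"
proof -
  obtain C1 C2 where C: "\<And>t. 0 < t \<and> t < t0 \<Longrightarrow> \<bar>f t\<bar> \<le> C1 * t ^ N" "\<And>t. 0 < t \<and> t < t0 \<Longrightarrow> \<bar>g t\<bar> \<le> C2 * t ^ N"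
    using assms unfolding Ob_def by blast
  show ?thesis
  proof (rule ObI[where C="C1 + C2"])
    fix t assume "0 < t" "t < t0"
    then show "\<bar>f t + g t\<bar> \<le> (C1 + C2) * t ^ N" using C[of t] by (simp add: algebra_simps)
  qed
qed

lemma Ob_cmult: assumes "Ob f N" shows "Ob (\<lambda>t. c * f t) N"
proof -
  obtain C where C: "\<And>t. 0 < t \<and> t < t0 \<Longrightarrow> \<bar>f t\<bar> \<le> C * t ^ N" using assms unfolding Ob_def by blast
  show ?thesis
  proof (rule ObI[where C="\<bar>c\<bar> * C"])
    fix t assume "0 < t" "t < t0"
    then have "\<bar>c\<bar> * \<bar>f t\<bar> \<le> \<bar>c\<bar> * (C * t ^ N)" using C[of t] by (intro mult_left_mono) auto
    then show "\<bar>c * f t\<bar> \<le> \<bar>c\<bar> * C * t ^ N" by (simp add: abs_mult algebra_simps)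
  qed
qed

lemma Ob_minus: "Ob f N \<Longrightarrow> Ob (\<lambda>t. - f t) N" using Ob_cmult[of f N "-1"] by simp
lemma Ob_diff: "Ob f N \<Longrightarrow> Ob g N \<Longrightarrow> Ob (\<lambda>t. f t - g t) N"
  using Ob_add[of f N "\<lambda>t. - g t"] Ob_minus[of g N] by simp

lemma Ob_sum: "finite I \<Longrightarrow> (\<And>i. i \<in> I \<Longrightarrow> Ob (f i) N) \<Longrightarrow> Ob (\<lambda>t. \<Sum>i\<in>I. f i t) N"
proof (induction I rule: finite_induct)
  case empty then show ?case by (simp add: Ob_zero)
next
  case (insert x F) then show ?case using Ob_add[of "f x" N "\<lambda>t. \<Sum>i\<in>F. f i t"] by simp
qed

lemma Ob_mono: assumes "Ob f N" "M \<le> N" shows "Ob f M"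
proof -
  obtain C where C: "\<And>t. 0 < t \<and> t < t0 \<Longrightarrow> \<bar>f t\<bar> \<le> C * t ^ N" using assms unfolding Ob_def by blast
  show ?thesis
  proof (rule ObI[where C="\<bar>C\<bar>"])
    fix t assume t: "0 < t" "t < t0"
    have "t ^ N \<le> t ^ M" using t t0_le1 assms(2) by (intro power_decreasing) auto
    then have "\<bar>C\<bar> * t ^ N \<le> \<bar>C\<bar> * t ^ M" by (intro mult_left_mono) auto
    moreover have "C * t ^ N \<le> \<bar>C\<bar> * t ^ N" using t by (intro mult_right_mono) auto
    ultimately show "\<bar>f t\<bar> \<le> \<bar>C\<bar> * t ^ M" using C[of t] t by linarith
  qed
qed

lemma Ob_tmult: assumes "Ob f N" shows "Ob (\<lambda>t. t * f t) (Suc N)"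
proof -
  obtain C where C: "\<And>t. 0 < t \<and> t < t0 \<Longrightarrow> \<bar>f t\<bar> \<le> C * t ^ N" using assms unfolding Ob_def by blast
  show ?thesis
  proof (rule ObI[where C=C])
    fix t assume t: "0 < t" "t < t0"
    then have "t * \<bar>f t\<bar> \<le> t * (C * t ^ N)" using C[of t] by (intro mult_left_mono) auto
    then show "\<bar>t * f t\<bar> \<le> C * t ^ Suc N" using t by (simp add: abs_mult algebra_simps)
  qed
qed

lemma Ob_pow: "Ob (\<lambda>t. c * t ^ N) N"
  by (rule ObI[where C="\<bar>c\<bar>"]) (simp add: abs_mult)

lemma r_small: assumes "0 < t" "t < t0" shows "0 \<le> sqrt t" "sqrt t < dl / 2" "sqrt t \<le> 1"
proof -
  have "sqrt t < sqrt t0" using assms by simp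
  then have "sqrt t < dl / 4" unfolding t0_def using dl_pos by simp
  then show "sqrt t < dl / 2" "sqrt t \<le> 1" using dl_pos dl_le1 by linarith+
qed (use assms in simp)

lemma W_rec: assumes "0 < t" "t < t0"
  shows "real (j + 1) * W (j + 1) t = real j * t * W (j - 1) t
     - (\<Sum>i=1..n-2. (real j + (real i + 2) / 2) * a i * W (j + i + 1) t)"
  using recursion[OF assms, of j] unfolding W_def by simp

lemma W_crude: "Ob (W m) (m div 2)"
proof (rule ObI[where C="4 * pi * 2 ^ m"])
  fix t assume t: "0 < t" "t < t0"
  note R = r_small[OF t]
  have "\<bar>W m t\<bar> \<le> 4 * pi * (2 * sqrt t) ^ m" unfolding W_def using crude[OF R(1,2)] .
  also have "\<dots> = 4 * pi * 2 ^ m * sqrt t ^ m" by (simp add: power_mult_distrib)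
  also have "sqrt t ^ m \<le> sqrt t ^ (2 * (m div 2))" using R by (intro power_decreasing) auto
  also have "sqrt t ^ (2 * (m div 2)) = t ^ (m div 2)" using t by (simp add: power_mult)
  finally show "\<bar>W m t\<bar> \<le> 4 * pi * 2 ^ m * t ^ (m div 2)" by (simp add: mult_left_mono)
qed

lemma W_base: "Ob (\<lambda>t. W 0 t - 2 * pi) 1"
proof (rule ObI[where C="2 * pi * C3"])
  fix t assume t: "0 < t" "t < t0"
  note R = r_small[OF t]
  show "\<bar>W 0 t - 2 * pi\<bar> \<le> 2 * pi * C3 * t ^ 1" unfolding W_def using base[OF R(1,2)] t by simp
qed

lemma W_sym: "oddzero \<Longrightarrow> 0 < t \<Longrightarrow> t < t0 \<Longrightarrow> W (2 * k + 1) t = 0"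
  unfolding W_def using sym_zero r_small by blast

lemma cc_step: "k \<ge> 1 \<Longrightarrow> cc k * real (2 * k) = cc (k - 1) * real (2 * k - 1)"
proof -
  assume k: "k \<ge> 1"
  then obtain q where q: "k = Suc q" by (cases k) auto
  have d1: "dfact (2 * k - 1) = (2 * k - 1) * dfact (2 * (k - 1) - 1)"
  proof (cases q)
    case 0 then show ?thesis using q by simp
  next
    case (Suc q') then show ?thesis using q by (simp add: numeral_eq_Suc)
  qed
  have d2: "dfact (2 * k) = 2 * k * dfact (2 * (k - 1))"
    using q by (simp add: numeral_eq_Suc)
  have pos: "dfact m > 0" for m by (induction m rule: dfact.induct) auto
  show ?thesis unfolding cc_def d1 d2 using pos[of "2 * (k - 1)"] k
    by (simp add: field_simps of_nat_diff)
qed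

end

context osc begin

abbreviation RHS :: "nat \<Rightarrow> real \<Rightarrow> real" where
  "RHS j t \<equiv> real j * t * W (j - 1) t - (\<Sum>i=1..n-2. (real j + (real i + 2) / 2) * a i * W (j + i + 1) t)"

lemma W_solve2: assumes "Ob (\<lambda>t. RHS j t - real (j + 1) * g t) N" shows "Ob (\<lambda>t. W (j + 1) t - g t) N"
proof -
  have "Ob (\<lambda>t. (1 / real (j + 1)) * (RHS j t - real (j + 1) * g t)) N" by (rule Ob_cmult[OF assms])
  then show ?thesis
  proof (rule Ob_cong)
    fix t assume t: "0 < t" "t < t0"
    have "real (j + 1) * W (j + 1) t = RHS j t" by (rule W_rec[OF t])
    then show "1 / real (j + 1) * (RHS j t - real (j + 1) * g t) = W (j + 1) t - g t"
      by (simp add: field_simps del: of_nat_Suc)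
  qed
qed

lemma W_solve: assumes "Ob (RHS j) N" shows "Ob (W (j + 1)) N"
  using W_solve2[of j "\<lambda>t. 0" N] assms by simp

lemma crude_mono: "N \<le> m div 2 \<Longrightarrow> Ob (W m) N" using Ob_mono[OF W_crude] .

lemma sum_terms_Ob: "(\<And>i. i \<in> {1..n-2} \<Longrightarrow> Ob (\<lambda>t. c i * a i * W (j + i + 1) t) N) \<Longrightarrow>
   Ob (\<lambda>t. \<Sum>i=1..n-2. c i * a i * W (j + i + 1) t) N"
  by (rule Ob_sum) auto

lemma odd1: "Ob (W (2 * k + 1)) (k + 1)"
proof (induction k)
  case 0
  have "Ob (RHS 0) 1"
  proof -
    have "Ob (\<lambda>t. \<Sum>i=1..n-2. (real 0 + (real i + 2) / 2) * a i * W (0 + i + 1) t) 1"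
      by (intro sum_terms_Ob Ob_cmult crude_mono) auto
    then show ?thesis using Ob_minus by simp
  qed
  then show ?case using W_solve[of 0 1] by simp
next
  case (Suc k)
  have "Ob (RHS (2 * Suc k)) (Suc k + 1)"
  proof (intro Ob_diff)
    show "Ob (\<lambda>t. real (2 * Suc k) * t * W (2 * Suc k - 1) t) (Suc k + 1)"
      using Ob_cmult[OF Ob_tmult[OF Suc.IH], of "real (2 * Suc k)"] by (simp add: mult.assoc)
    show "Ob (\<lambda>t. \<Sum>i=1..n-2. (real (2 * Suc k) + (real i + 2) / 2) * a i * W (2 * Suc k + i + 1) t) (Suc k + 1)"
      by (intro sum_terms_Ob Ob_cmult crude_mono) auto
  qed
  then show ?case using W_solve[of "2 * Suc k" "Suc k + 1"] by simp
qed

lemma cc0: "cc 0 = 2 * pi" unfolding cc_def by simp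

lemma even: "Ob (\<lambda>t. W (2 * k) t - t ^ k * cc k) (k + 1)"
proof (induction k)
  case 0
  show ?case using W_base by (simp add: cc0)
next
  case (Suc k)
  have cs: "real (2 * k + 1 + 1) * cc (Suc k) = real (2 * k + 1) * cc k"
    using cc_step[of "Suc k"] by (simp add: algebra_simps)
  have "Ob (\<lambda>t. RHS (2 * k + 1) t - real (2 * k + 1 + 1) * (t ^ Suc k * cc (Suc k))) (Suc k + 1)"
  proof -
    have A: "Ob (\<lambda>t. real (2 * k + 1) * (t * (W (2 * k) t - t ^ k * cc k))) (Suc k + 1)"
      using Ob_cmult[OF Ob_tmult[OF Suc.IH]] by simp
    have B: "Ob (\<lambda>t. \<Sum>i=1..n-2. (real (2 * k + 1) + (real i + 2) / 2) * a i * W (2 * k + 1 + i + 1) t) (Suc k + 1)"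
    proof (intro sum_terms_Ob Ob_cmult)
      fix i assume i: "i \<in> {1..n-2}"
      show "Ob (W (2 * k + 1 + i + 1)) (Suc k + 1)"
      proof (cases "i = 1")
        case True
        then show ?thesis using odd1[of "Suc k"] by (simp add: algebra_simps)
      next
        case False
        then show ?thesis using i by (intro crude_mono) auto
      qed
    qed
    have "Ob (\<lambda>t. real (2 * k + 1) * (t * (W (2 * k) t - t ^ k * cc k))
        - (\<Sum>i=1..n-2. (real (2 * k + 1) + (real i + 2) / 2) * a i * W (2 * k + 1 + i + 1) t)) (Suc k + 1)"
      by (rule Ob_diff[OF A B])
    then show ?thesis
    proof (rule Ob_cong)
      fix t :: real
      have "real (2 * k + 1 + 1) * (t ^ Suc k * cc (Suc k)) = (real (2 * k + 1 + 1) * cc (Suc k)) * (t * t ^ k)"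
        by (simp add: algebra_simps)
      also have "\<dots> = (real (2 * k + 1) * cc k) * (t * t ^ k)" by (simp only: cs)
      also have "\<dots> = real (2 * k + 1) * (t * (t ^ k * cc k))" by (simp add: algebra_simps)
      finally have "real (2 * k + 1 + 1) * (t ^ Suc k * cc (Suc k)) = real (2 * k + 1) * (t * (t ^ k * cc k))" .
      then show "real (2 * k + 1) * (t * (W (2 * k) t - t ^ k * cc k))
        - (\<Sum>i=1..n-2. (real (2 * k + 1) + (real i + 2) / 2) * a i * W (2 * k + 1 + i + 1) t)
        = RHS (2 * k + 1) t - real (2 * k + 1 + 1) * (t ^ Suc k * cc (Suc k))"
        by (simp add: algebra_simps)
    qed
  qed
  then show ?case using W_solve2[of "2 * k + 1" "\<lambda>t. t ^ Suc k * cc (Suc k)" "Suc k + 1"] by simp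
qed

end

context osc begin

definition gg :: nat where "gg = (n - 1) div 2"
definition mm :: nat where "mm = (LEAST j. 1 \<le> j \<and> j \<le> gg \<and> a (2 * j - 1) \<noteq> 0)"

lemma odd_idx: assumes "i \<in> {1..n-2}" "odd i"
  shows "1 \<le> (i + 1) div 2" "(i + 1) div 2 \<le> gg" "2 * ((i + 1) div 2) - 1 = i" "i = 2 * ((i + 1) div 2) - 1"
  using assms unfolding gg_def by (auto elim!: oddE)

lemma nonoddzero: assumes "\<not> oddzero" shows "\<exists>j. 1 \<le> j \<and> j \<le> gg \<and> a (2 * j - 1) \<noteq> 0"
proof -
  obtain i where i: "i \<in> {1..n-2}" "odd i" "a i \<noteq> 0" using assms unfolding oddzero_def by auto
  then show ?thesis using odd_idx[OF i(1,2)] by metis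
qed

lemma mm_props: assumes "\<not> oddzero"
  shows "1 \<le> mm" "mm \<le> gg" "a (2 * mm - 1) \<noteq> 0" "\<And>j. j < mm \<Longrightarrow> 1 \<le> j \<Longrightarrow> a (2 * j - 1) = 0"
proof -
  obtain j0 where j0: "1 \<le> j0 \<and> j0 \<le> gg \<and> a (2 * j0 - 1) \<noteq> 0" using nonoddzero[OF assms] by blast
  have L: "1 \<le> mm \<and> mm \<le> gg \<and> a (2 * mm - 1) \<noteq> 0" unfolding mm_def by (rule LeastI[of _ j0]) (rule j0)
  then show "1 \<le> mm" "mm \<le> gg" "a (2 * mm - 1) \<noteq> 0" by auto
  fix j assume "j < mm" "1 \<le> j"
  then show "a (2 * j - 1) = 0" using not_less_Least[of j "\<lambda>j. 1 \<le> j \<and> j \<le> gg \<and> a (2 * j - 1) \<noteq> 0"] L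
    unfolding mm_def by auto
qed

lemma small_odd_zero: assumes "\<not> oddzero" "i \<in> {1..n-2}" "odd i" "(i + 1) div 2 < mm" shows "a i = 0"
  using mm_props(4)[OF assms(1) assms(4) odd_idx(1)[OF assms(2,3)]] odd_idx(3)[OF assms(2,3)] by simp

lemma oddL: assumes nz: "\<not> oddzero" shows "L \<le> mm \<Longrightarrow> Ob (W (2 * k + 1)) (k + L)"
proof (induction L arbitrary: k)
  case 0
  show ?case by (rule crude_mono) simp
next
  case (Suc L)
  have IHL: "Ob (W (2 * k' + 1)) (k' + L)" for k' using Suc by simp
  show ?case
  proof (induction k)
    case 0
    have "Ob (RHS 0) (0 + Suc L)"
    proof -
      have "Ob (\<lambda>t. \<Sum>i=1..n-2. (real 0 + (real i + 2) / 2) * a i * W (0 + i + 1) t) (0 + Suc L)"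
      proof (intro sum_terms_Ob)
        fix i assume i: "i \<in> {1..n-2}"
        show "Ob (\<lambda>t. (real 0 + (real i + 2) / 2) * a i * W (0 + i + 1) t) (0 + Suc L)"
        proof (cases "odd i")
          case True
          note oi = odd_idx[OF i True]
          show ?thesis
          proof (cases "(i + 1) div 2 < mm")
            case True
            then have "a i = 0" using small_odd_zero[OF nz i \<open>odd i\<close>] by simp
            then show ?thesis using Ob_zero by simp
          next
            case False
            then have "Suc L \<le> (i + 1) div 2" using Suc.prems by simp
            then show ?thesis by (intro Ob_cmult crude_mono) simp
          qed
        next
          case False
          then obtain l where l: "i = 2 * l" "1 \<le> l" using i by (auto elim!: evenE)
          have "Ob (W (2 * l + 1)) (l + L)" by (rule IHL)
          then have "Ob (W (2 * l + 1)) (0 + Suc L)" by (rule Ob_mono) (use l in simp)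
          then show ?thesis using l by (intro Ob_cmult) simp
        qed
      qed
      then show ?thesis using Ob_minus by simp
    qed
    then show ?case using W_solve[of 0 "Suc L"] by simp
  next
    case (Suc k)
    have "Ob (RHS (2 * Suc k)) (Suc k + Suc L)"
    proof (intro Ob_diff)
      show "Ob (\<lambda>t. real (2 * Suc k) * t * W (2 * Suc k - 1) t) (Suc k + Suc L)"
        using Ob_cmult[OF Ob_tmult[OF Suc.IH], of "real (2 * Suc k)"] by (simp add: mult.assoc)
      show "Ob (\<lambda>t. \<Sum>i=1..n-2. (real (2 * Suc k) + (real i + 2) / 2) * a i * W (2 * Suc k + i + 1) t) (Suc k + Suc L)"
      proof (intro sum_terms_Ob)
        fix i assume i: "i \<in> {1..n-2}"
        show "Ob (\<lambda>t. (real (2 * Suc k) + (real i + 2) / 2) * a i * W (2 * Suc k + i + 1) t) (Suc k + Suc L)"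
        proof (cases "odd i")
          case True
          note oi = odd_idx[OF i True]
          show ?thesis
          proof (cases "(i + 1) div 2 < mm")
            case True
            then have "a i = 0" using small_odd_zero[OF nz i \<open>odd i\<close>] by simp
            then show ?thesis using Ob_zero by simp
          next
            case False
            then have "Suc L \<le> (i + 1) div 2" using \<open>Suc L \<le> mm\<close> by simp
            then show ?thesis using oi by (intro Ob_cmult crude_mono) (auto elim!: oddE)
          qed
        next
          case False
          then obtain l where l: "i = 2 * l" "1 \<le> l" using i by (auto elim!: evenE)
          have "Ob (W (2 * (Suc k + l) + 1)) (Suc k + l + L)" by (rule IHL)
          then have "Ob (W (2 * (Suc k + l) + 1)) (Suc k + Suc L)" by (rule Ob_mono) (use l in simp)
          then show ?thesis using l by (intro Ob_cmult) (simp add: algebra_simps)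
        qed
      qed
    qed
    then show ?case using W_solve[of "2 * Suc k" "Suc k + Suc L"] by simp
  qed
qed

end

context osc begin

definition Tk :: "nat \<Rightarrow> nat \<Rightarrow> real \<Rightarrow> real" where
  "Tk k i t = (if odd i then a i * real (2 * k + i + 2) * cc (k + (i + 1) div 2) * t ^ (k + (i + 1) div 2) else 0)"
definition Sk :: "nat \<Rightarrow> real \<Rightarrow> real" where
  "Sk k t = (1 / 2) * (\<Sum>i=1..n-2. Tk k i t)"
definition Ev :: "nat \<Rightarrow> nat \<Rightarrow> real \<Rightarrow> real" where
  "Ev k i t = (if odd i then cc (k + (i + 1) div 2) * t ^ (k + (i + 1) div 2) else 0)"

lemma Zterm: assumes i: "odd i"
  shows "real (2 * k + 1) / 2 * Tk k i t - real (2 * k) * t / 2 * Tk (k - 1) i t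
     - (real (2 * k) + (real i + 2) / 2) * a i * Ev k i t = 0"
proof -
  obtain q where q: "i = 2 * q + 1" using i by (auto elim!: oddE)
  have qi: "(i + 1) div 2 = q + 1" using q by simp
  show ?thesis
  proof (cases k)
    case 0
    then show ?thesis unfolding Tk_def Ev_def using i by (simp add: algebra_simps)
  next
    case (Suc k')
    define K where "K = k + q + 1"
    have K1: "K \<ge> 1" unfolding K_def by simp
    have cs: "cc K * real (2 * K) = cc (K - 1) * real (2 * K - 1)" by (rule cc_step[OF K1])
    have e1: "k - 1 + (i + 1) div 2 = K - 1" unfolding K_def using Suc qi by simp
    have e2: "k + (i + 1) div 2 = K" unfolding K_def using qi by simp
    have tp: "t * t ^ (K - 1) = t ^ K" using K1 by (cases K) auto
    have r1: "real (2 * (k - 1) + i + 2) = real (2 * K - 1)" unfolding K_def using Suc q by simp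
    have T1: "Tk (k - 1) i t = a i * real (2 * K - 1) * cc (K - 1) * t ^ (K - 1)"
      unfolding Tk_def if_P[OF i] e1 r1 ..
    have "real (2 * k) * t / 2 * Tk (k - 1) i t = real k * a i * (cc (K - 1) * real (2 * K - 1)) * (t * t ^ (K - 1))"
      unfolding T1 by (simp add: algebra_simps)
    also have "\<dots> = real k * a i * cc K * real (2 * K) * t ^ K" unfolding cs[symmetric] tp by (simp add: algebra_simps)
    finally have m: "real (2 * k) * t / 2 * Tk (k - 1) i t = real k * a i * cc K * real (2 * K) * t ^ K" .
    have f: "real (2 * k + 1) / 2 * Tk k i t = real (2 * k + 1) / 2 * (a i * real (2 * k + i + 2) * cc K * t ^ K)"
      unfolding Tk_def using i e2 by simp
    have l: "(real (2 * k) + (real i + 2) / 2) * a i * Ev k i t = (real (2 * k) + (real i + 2) / 2) * a i * (cc K * t ^ K)"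
      unfolding Ev_def using i e2 by simp
    show ?thesis unfolding m f l unfolding K_def q by (simp add: field_simps)
  qed
qed

lemma Bterm: assumes nz: "\<not> oddzero" and i: "i \<in> {1..n-2}"
  shows "Ob (\<lambda>t. a i * (W (2 * k + i + 1) t - Ev k i t)) (k + mm + 1)"
proof (cases "odd i")
  case True
  define q where "q = (i + 1) div 2"
  have iq: "2 * k + i + 1 = 2 * (k + q)" unfolding q_def using True by (auto elim!: oddE)
  have Evq: "Ev k i t = t ^ (k + q) * cc (k + q)" for t unfolding Ev_def q_def using True by simp
  show ?thesis
  proof (cases "q < mm")
    case True
    then have "a i = 0" using small_odd_zero[OF nz i \<open>odd i\<close>] unfolding q_def by simp
    then show ?thesis using Ob_zero by simp
  next
    case False
    have "Ob (\<lambda>t. W (2 * (k + q)) t - t ^ (k + q) * cc (k + q)) (k + q + 1)" by (rule even)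
    then have "Ob (\<lambda>t. W (2 * (k + q)) t - t ^ (k + q) * cc (k + q)) (k + mm + 1)"
      by (rule Ob_mono) (use False in simp)
    then show ?thesis unfolding iq Evq by (rule Ob_cmult)
  qed
next
  case False
  then obtain l where l: "i = 2 * l" "1 \<le> l" using i by (auto elim!: evenE)
  have "Ob (W (2 * (k + l) + 1)) (k + l + mm)" by (rule oddL[OF nz]) simp
  then have "Ob (W (2 * (k + l) + 1)) (k + mm + 1)" by (rule Ob_mono) (use l in simp)
  moreover have "2 * k + i + 1 = 2 * (k + l) + 1" using l by simp
  moreover have "Ev k i t = 0" for t unfolding Ev_def using False by simp
  ultimately show ?thesis by (intro Ob_cmult) simp
qed

lemma Sk_rel: "real (2 * k + 1) * Sk k t = real (2 * k) * t * Sk (k - 1) t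
   + (\<Sum>i=1..n-2. (real (2 * k) + (real i + 2) / 2) * a i * Ev k i t)"
proof -
  have "(\<Sum>i=1..n-2. real (2 * k + 1) / 2 * Tk k i t - real (2 * k) * t / 2 * Tk (k - 1) i t
     - (real (2 * k) + (real i + 2) / 2) * a i * Ev k i t) = 0"
  proof (intro sum.neutral ballI)
    fix i assume "i \<in> {1..n-2}"
    show "real (2 * k + 1) / 2 * Tk k i t - real (2 * k) * t / 2 * Tk (k - 1) i t
     - (real (2 * k) + (real i + 2) / 2) * a i * Ev k i t = 0"
    proof (cases "odd i")
      case True then show ?thesis by (rule Zterm)
    next
      case False then show ?thesis unfolding Tk_def Ev_def by simp
    qed
  qed
  then have z: "(\<Sum>i=1..n-2. real (2 * k + 1) / 2 * Tk k i t) - (\<Sum>i=1..n-2. real (2 * k) * t / 2 * Tk (k - 1) i t)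
     - (\<Sum>i=1..n-2. (real (2 * k) + (real i + 2) / 2) * a i * Ev k i t) = 0"
    by (simp only: sum_subtractf)
  have x: "(\<Sum>i=1..n-2. real (2 * k + 1) / 2 * Tk k i t) = real (2 * k + 1) * Sk k t"
    unfolding Sk_def sum_distrib_left by (simp add: mult_ac)
  have y: "(\<Sum>i=1..n-2. real (2 * k) * t / 2 * Tk (k - 1) i t) = real (2 * k) * t * Sk (k - 1) t"
    unfolding Sk_def sum_distrib_left by (simp add: mult_ac)
  show ?thesis using z unfolding x y by simp
qed

lemma oddQ: assumes nz: "\<not> oddzero" shows "Ob (\<lambda>t. W (2 * k + 1) t + Sk k t) (k + mm + 1)"
proof (induction k)
  case 0
  have B: "Ob (\<lambda>t. \<Sum>i=1..n-2. (real (2 * 0) + (real i + 2) / 2) * (a i * (W (2 * 0 + i + 1) t - Ev 0 i t))) (0 + mm + 1)"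
    by (intro Ob_sum Ob_cmult Bterm[OF nz]) auto
  have "Ob (\<lambda>t. RHS (2 * 0) t - real (2 * 0 + 1) * (- Sk 0 t)) (0 + mm + 1)"
    using Ob_minus[OF B]
  proof (rule Ob_cong)
    fix t :: real
    show "- (\<Sum>i=1..n-2. (real (2 * 0) + (real i + 2) / 2) * (a i * (W (2 * 0 + i + 1) t - Ev 0 i t)))
      = RHS (2 * 0) t - real (2 * 0 + 1) * (- Sk 0 t)"
      using Sk_rel[of 0 t] by (simp add: algebra_simps sum_subtractf)
  qed
  then show ?case using W_solve2[of "2 * 0" "\<lambda>t. - Sk 0 t" "0 + mm + 1"] by simp
next
  case (Suc k)
  have A: "Ob (\<lambda>t. real (2 * Suc k) * (t * (W (2 * k + 1) t + Sk k t))) (Suc k + mm + 1)"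
    using Ob_cmult[OF Ob_tmult[OF Suc.IH]] by simp
  have B: "Ob (\<lambda>t. \<Sum>i=1..n-2. (real (2 * Suc k) + (real i + 2) / 2) * (a i * (W (2 * Suc k + i + 1) t - Ev (Suc k) i t))) (Suc k + mm + 1)"
    by (intro Ob_sum Ob_cmult Bterm[OF nz]) auto
  have "Ob (\<lambda>t. RHS (2 * Suc k) t - real (2 * Suc k + 1) * (- Sk (Suc k) t)) (Suc k + mm + 1)"
    using Ob_diff[OF A B]
  proof (rule Ob_cong)
    fix t :: real
    have e: "2 * Suc k - 1 = 2 * k + 1" by simp
    show "real (2 * Suc k) * (t * (W (2 * k + 1) t + Sk k t))
      - (\<Sum>i=1..n-2. (real (2 * Suc k) + (real i + 2) / 2) * (a i * (W (2 * Suc k + i + 1) t - Ev (Suc k) i t)))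
      = RHS (2 * Suc k) t - real (2 * Suc k + 1) * (- Sk (Suc k) t)"
      using Sk_rel[of "Suc k" t] unfolding e by (simp add: algebra_simps sum_subtractf)
  qed
  then show ?case using W_solve2[of "2 * Suc k" "\<lambda>t. - Sk (Suc k) t" "Suc k + mm + 1"] by simp
qed

end

context osc begin

lemma Ob_bigo: assumes "Ob f N" shows "f \<in> O[at_right 0](\<lambda>t. t ^ N)"
proof -
  obtain C where C: "\<And>t. 0 < t \<and> t < t0 \<Longrightarrow> \<bar>f t\<bar> \<le> C * t ^ N" using assms unfolding Ob_def by blast
  have "eventually (\<lambda>t. norm (f t) \<le> C * norm (t ^ N)) (at_right (0::real))"
  proof (rule eventually_at_rightI[where b=t0])
    fix t assume "t \<in> {0<..<t0}"
    then show "norm (f t) \<le> C * norm (t ^ N)" using C[of t] by simp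
  qed (rule t0_pos)
  then show ?thesis by (rule bigoI)
qed

lemma Ob_div: assumes "Ob f (N + p)" shows "Ob (\<lambda>t. f t / t ^ p) N"
proof -
  obtain C where C: "\<And>t. 0 < t \<and> t < t0 \<Longrightarrow> \<bar>f t\<bar> \<le> C * t ^ (N + p)" using assms unfolding Ob_def by blast
  show ?thesis
  proof (rule ObI[where C=C])
    fix t :: real assume t: "0 < t" "t < t0"
    have "\<bar>f t / t ^ p\<bar> = \<bar>f t\<bar> / t ^ p" using t by (simp add: abs_div)
    also have "\<dots> \<le> C * t ^ (N + p) / t ^ p" using C[of t] t by (intro divide_right_mono) auto
    also have "\<dots> = C * t ^ N" using t by (simp add: power_add)
    finally show "\<bar>f t / t ^ p\<bar> \<le> C * t ^ N" .
  qed
qed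

lemma oval_W: "0 < t \<Longrightarrow> t < t0 \<Longrightarrow> oval_integral HH m t = W m t"
  unfolding W_def by (rule oval_integral_eq)

lemma odd_set: "{i \<in> {1..n-2}. odd i} = (\<lambda>j. 2 * j - 1) ` {1..gg}"
proof
  show "{i \<in> {1..n-2}. odd i} \<subseteq> (\<lambda>j. 2 * j - 1) ` {1..gg}"
  proof
    fix i assume i: "i \<in> {i \<in> {1..n-2}. odd i}"
    then have "i \<in> {1..n-2}" "odd i" by auto
    note o = odd_idx[OF this]
    then show "i \<in> (\<lambda>j. 2 * j - 1) ` {1..gg}" by (intro image_eqI[of _ _ "(i + 1) div 2"]) auto
  qed
  show "(\<lambda>j. 2 * j - 1) ` {1..gg} \<subseteq> {i \<in> {1..n-2}. odd i}"
  proof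
    fix i assume "i \<in> (\<lambda>j. 2 * j - 1) ` {1..gg}"
    then obtain j where j: "i = 2 * j - 1" "1 \<le> j" "j \<le> gg" by auto
    have "2 * gg \<le> n - 1" unfolding gg_def by simp
    then show "i \<in> {i \<in> {1..n-2}. odd i}" using j n5 by auto
  qed
qed

lemma Sk_reindex: "Sk k t = (1 / 2) * (\<Sum>j=1..gg. a (2 * j - 1) * real (2 * k + 2 * j + 1) * t ^ (k + j) * cc (k + j))"
proof -
  have "(\<Sum>i=1..n-2. Tk k i t) = (\<Sum>i\<in>{i \<in> {1..n-2}. odd i}. a i * real (2 * k + i + 2) * cc (k + (i + 1) div 2) * t ^ (k + (i + 1) div 2))"
    unfolding Tk_def by (rule sum.inter_filter[symmetric]) simp
  also have "\<dots> = (\<Sum>j\<in>{1..gg}. a (2 * j - 1) * real (2 * k + (2 * j - 1) + 2) * cc (k + (2 * j - 1 + 1) div 2) * t ^ (k + (2 * j - 1 + 1) div 2))"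
    unfolding odd_set by (subst sum.reindex) (auto simp: inj_on_def)
  also have "\<dots> = (\<Sum>j=1..gg. a (2 * j - 1) * real (2 * k + 2 * j + 1) * t ^ (k + j) * cc (k + j))"
  proof (intro sum.cong refl)
    fix j assume "j \<in> {1..gg}"
    then have "2 * k + (2 * j - 1) + 2 = 2 * k + 2 * j + 1" "(2 * j - 1 + 1) div 2 = j" by auto
    then show "a (2 * j - 1) * real (2 * k + (2 * j - 1) + 2) * cc (k + (2 * j - 1 + 1) div 2) * t ^ (k + (2 * j - 1 + 1) div 2)
      = a (2 * j - 1) * real (2 * k + 2 * j + 1) * t ^ (k + j) * cc (k + j)" by (simp only: mult_ac)
  qed
  finally show ?thesis unfolding Sk_def by simp
qed

theorem main:
  shows "(\<forall>k. (\<lambda>t. oval_integral HH (2 * k) t - t ^ k * cc k) \<in> O[at_right 0](\<lambda>t. t ^ (k + 1)))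
       \<and> (\<forall>k. \<exists>\<phi> :: nat \<Rightarrow> real \<Rightarrow> real.
             (\<forall>j \<in> {1..gg}. \<phi> j \<in> O[at_right 0](\<lambda>t. t)) \<and>
             (\<forall>\<^sub>F t in at_right 0.
                oval_integral HH (2 * k + 1) t =
                  - (1 / 2) * (\<Sum>j = 1..gg. a (2 * j - 1) * real (2 * k + 2 * j + 1)
                                 * t ^ (k + j) * (cc (k + j) + \<phi> j t))))"
proof (intro conjI allI)
  fix k
  have "Ob (\<lambda>t. oval_integral HH (2 * k) t - t ^ k * cc k) (k + 1)"
    using even[of k] by (rule Ob_cong) (simp add: oval_W)
  then show "(\<lambda>t. oval_integral HH (2 * k) t - t ^ k * cc k) \<in> O[at_right 0](\<lambda>t. t ^ (k + 1))"
    by (rule Ob_bigo)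
next
  fix k
  show "\<exists>\<phi> :: nat \<Rightarrow> real \<Rightarrow> real.
             (\<forall>j \<in> {1..gg}. \<phi> j \<in> O[at_right 0](\<lambda>t. t)) \<and>
             (\<forall>\<^sub>F t in at_right 0.
                oval_integral HH (2 * k + 1) t =
                  - (1 / 2) * (\<Sum>j = 1..gg. a (2 * j - 1) * real (2 * k + 2 * j + 1)
                                 * t ^ (k + j) * (cc (k + j) + \<phi> j t)))"
  proof (cases oddzero)
    case True
    have z: "a (2 * j - 1) = 0" if "j \<in> {1..gg}" for j
    proof -
      have "2 * j - 1 \<in> {i \<in> {1..n-2}. odd i}" unfolding odd_set using that by auto
      then show ?thesis using True unfolding oddzero_def by auto
    qed
    show ?thesis
    proof (intro exI conjI ballI)
      fix j :: nat
      have "Ob (\<lambda>t. 0) 1" by (rule Ob_zero)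
      then show "(\<lambda>t. 0::real) \<in> O[at_right 0](\<lambda>t. t)" using Ob_bigo[of "\<lambda>t. 0" 1] by simp
    next
      show "\<forall>\<^sub>F t in at_right 0. oval_integral HH (2 * k + 1) t = - (1 / 2) * (\<Sum>j = 1..gg. a (2 * j - 1) * real (2 * k + 2 * j + 1)
                                 * t ^ (k + j) * (cc (k + j) + (\<lambda>j t. 0) j t))"
      proof (rule eventually_at_rightI[where b=t0])
        fix t assume t: "t \<in> {0<..<t0}"
        then show "oval_integral HH (2 * k + 1) t = - (1 / 2) * (\<Sum>j = 1..gg. a (2 * j - 1) * real (2 * k + 2 * j + 1)
                                 * t ^ (k + j) * (cc (k + j) + (\<lambda>j t. 0) j t))"
          using oval_W[of t] W_sym[OF True, of t k] z by simp
      qed (rule t0_pos)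
    qed
  next
    case False
    define E where "E t = W (2 * k + 1) t + Sk k t" for t
    define A0 where "A0 = a (2 * mm - 1) * real (2 * k + 2 * mm + 1)"
    have A0: "A0 \<noteq> 0" unfolding A0_def using mm_props(3)[OF False] by simp
    have mmg: "mm \<in> {1..gg}" using mm_props(1,2)[OF False] by simp
    define \<phi> where "\<phi> j t = (if j = mm then - 2 * E t / (A0 * t ^ (k + mm)) else 0)" for j t
    have EO: "Ob E (k + mm + 1)" unfolding E_def by (rule oddQ[OF False])
    show ?thesis
    proof (intro exI conjI ballI)
      fix j :: nat
      have "Ob (\<phi> j) 1"
      proof (cases "j = mm")
        case True
        have "Ob (\<lambda>t. E t / t ^ (k + mm)) 1" by (rule Ob_div) (use EO in \<open>simp add: algebra_simps\<close>)
        then have "Ob (\<lambda>t. (- 2 / A0) * (E t / t ^ (k + mm))) 1" by (rule Ob_cmult)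
        then show ?thesis unfolding \<phi>_def using True by (simp add: field_simps)
      next
        case False then show ?thesis unfolding \<phi>_def using Ob_zero by simp
      qed
      then show "\<phi> j \<in> O[at_right 0](\<lambda>t. t)" using Ob_bigo[of "\<phi> j" 1] by simp
    next
      show "\<forall>\<^sub>F t in at_right 0. oval_integral HH (2 * k + 1) t = - (1 / 2) * (\<Sum>j = 1..gg. a (2 * j - 1) * real (2 * k + 2 * j + 1)
                                 * t ^ (k + j) * (cc (k + j) + \<phi> j t))"
      proof (rule eventually_at_rightI[where b=t0])
        fix t :: real assume t: "t \<in> {0<..<t0}"
        then have tp: "0 < t" "t < t0" by auto
        define f where "f j = a (2 * j - 1) * real (2 * k + 2 * j + 1) * t ^ (k + j)" for j
        have "(\<Sum>j = 1..gg. f j * (cc (k + j) + \<phi> j t)) = (\<Sum>j = 1..gg. f j * cc (k + j)) + (\<Sum>j = 1..gg. f j * \<phi> j t)"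
          by (simp add: distrib_left sum.distrib)
        also have "(\<Sum>j = 1..gg. f j * cc (k + j)) = 2 * Sk k t" unfolding Sk_reindex f_def by simp
        also have "(\<Sum>j = 1..gg. f j * \<phi> j t) = (\<Sum>j = 1..gg. if j = mm then f mm * \<phi> mm t else 0)"
          by (intro sum.cong refl) (simp add: \<phi>_def)
        also have "\<dots> = f mm * \<phi> mm t" using mmg by simp
        also have "f mm * \<phi> mm t = - 2 * E t"
        proof -
          have fm: "f mm = A0 * t ^ (k + mm)" unfolding f_def A0_def by simp
          have nz: "A0 * t ^ (k + mm) \<noteq> 0" using A0 tp by simp
          show ?thesis unfolding fm \<phi>_def using nz by simp
        qed
        finally have "(\<Sum>j = 1..gg. f j * (cc (k + j) + \<phi> j t)) = 2 * Sk k t - 2 * E t" by simp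
        then show "oval_integral HH (2 * k + 1) t = - (1 / 2) * (\<Sum>j = 1..gg. a (2 * j - 1) * real (2 * k + 2 * j + 1)
                                 * t ^ (k + j) * (cc (k + j) + \<phi> j t))"
          unfolding f_def using oval_W[OF tp] unfolding E_def by simp
      qed (rule t0_pos)
    qed
  qed
qed

end

theorem lemma1:
  fixes n :: nat and a :: "nat \<Rightarrow> real" and H :: "real \<times> real \<Rightarrow> real" and g :: nat
  assumes "n \<ge> 5"
    and "a (n - 2) \<noteq> 0"
    and "H = (\<lambda>(x, y). y ^ 2 + x ^ 2 + (\<Sum>k = 1..n - 2. a k * x ^ (k + 2)))"
    and "g = (n - 1) div 2"
  shows "(\<forall>k. (\<lambda>t. oval_integral H (2 * k) t - t ^ k * cc k) \<in> O[at_right 0](\<lambda>t. t ^ (k + 1)))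
       \<and> (\<forall>k. \<exists>\<phi> :: nat \<Rightarrow> real \<Rightarrow> real.
             (\<forall>j \<in> {1..g}. \<phi> j \<in> O[at_right 0](\<lambda>t. t)) \<and>
             (\<forall>\<^sub>F t in at_right 0.
                oval_integral H (2 * k + 1) t =
                  - (1 / 2) * (\<Sum>j = 1..g. a (2 * j - 1) * real (2 * k + 2 * j + 1)
                                 * t ^ (k + j) * (cc (k + j) + \<phi> j t))))"
proof -
  interpret osc n a using assms(1) by unfold_locales
  have H: "H = HH" using assms(3) unfolding HH_def by simp
  have g: "g = gg" unfolding gg_def using assms(4) .
  show ?thesis unfolding H g by (rule main)
qed


end
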